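(* Consider any finite game in extensive form with perfect recall. Let $\bar\beta^1$ be a profile of full-support belief systems and $\beta^1$ a profile of full-support beliefs in the associated normal form consistent with $\bar\beta^1$. Then for every $k\ge1$, $Z(\bar L^k(\bar\beta^1))\subseteq Z(L^k(\beta^1))$, i.e., every terminal history reached by a profile of strong level-$k$ thinking strategies is reached by a profile of normal-form level-$k$ thinking strategies.
   Context: Setting: a finite extensive-form game with finite player set $N$, possibly moves of nature $c$ (treated as a player with singleton information sets, indifferent among outcomes), possibly simultaneous moves, imperfect information, finite horizon and perfect recall. $Z$ is the set of terminal histories; $u_i:Z\to\mathbb{R}$ is player $i$'s utility; $\mathcal{I}_i$ is the set of information sets of player $i$. A strategy $s_i$ assigns an available action to each $I_i\in\mathcal I_i$; $S_i$ is the set of strategies; $S_{-i}$ is the product of other players' strategy sets and nature's (if nature moves). $z(s)$ is the terminal history reached by profile $s$. A profile $s_{-i}$ reaches $I_i$ if some $s_i$ makes $(s_i,s_{-i})$ reach $I_i$; $s_i$ reaches $I_i$ if some $s_{-i}$ makes $(s_i,s_{-i})$ reach $I_i$. $S_{-i}(I_i)$ is the set of $s_{-i}$ reaching $I_i$. For a set of profiles $S'$, $Z(S')=\{z(s):s\in S'\}$; for sets $X_j\subseteq S_j$ ($j\in N$), profiles are formed with nature's strategy unrestricted, i.e., $X_{-i}=\times_{j\in N\setminus\{i\}}X_j\times S_c$ and $Z(\times_{j\in N}X_j)=\{z(s): s_j\in X_j\ \forall j\in N,\ s_c\in S_c\}$. Belief systems: $\bar\beta_i=(\bar\beta_i(I_i))_{I_i\in\mathcal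 I_i}$, $\bar\beta_i(I_i)\in\Delta(S_{-i})$, $\bar\beta_i(I_i)(S_{-i}(I_i))=1$, and if $I_i$ precedes $I_i'$ then $\bar\beta_i(I_i')$ is obtained from $\bar\beta_i(I_i)$ by conditioning whenever possible; $\bar B_i$ is the set of belief systems of $i$. Full-support: each $\bar\beta_i(I_i)$ gives positive probability to every element of $S_{-i}(I_i)$. $s_i'$ is an $I_i$-replacement of $s_i$ if it agrees with $s_i$ on all information sets strictly preceding $I_i$. $s_i$ is rational at $I_i$ with $\bar\beta_i$ if $s_i$ does not reach $I_i$ or no $I_i$-replacement of $s_i$ gives strictly higher expected utility w.r.t. $\bar\beta_i(I_i)$. Strong level-$k$ thinking: $\bar B_i^1(\bar\beta^1)=\{\bar\beta_i^1\}$, $\bar L_i^1(\bar\beta^1)=\{s_i: s_i \text{ rational at every } I_i \text{ with }\bar\beta_i^1\}$. For $k\ge2$, $\bar B_i^k(\bar\beta^1)$ is the set of $\bar\beta_i\in\bar B_i$ such that for every $I_i\in\mathcal I_i$: if there is $\ell$ with $1\le\ell<k$ and some $s_{-i}\in\bar L^\ell_{-i}(\bar\beta^1)$ reaching $I_i$, then, letting $\bar\ell$ be the largest such $\ell$, $\bar\beta_i(I_i)(\bar L^{\bar\ell}_{-i}(\bar\beta^1))=1$; otherwise $\bar\beta_i(I_i)=\bar\beta_i^1(I_i)$. Then $\bar L_i^k(\bar\beta^1)=\{s_i:\exists\bar\beta_i\in\bar B_i^k(\bar\beta^1)\text{ with which } s_i\text{ is rational at every } I_i\in\mathcal I_i\}$,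 and $\bar L^k(\bar\beta^1)=\times_{i\in N}\bar L^k_i(\bar\beta^1)$. Associated normal form: actions $S_i$, payoff of profile $s$ is $u_i(z(s))$. $\beta^1_i\in\Delta(S_{-i})$ is full-support if it gives positive probability to all of $S_{-i}$, and consistent with $\bar\beta^1_i$ if $\bar\beta^1_i(I_i)=\beta^1_i(\cdot\mid S_{-i}(I_i))$ for all $I_i$. Normal-form level-$k$: $L_i^1(\beta^1)$ is the set of expected-utility maximizers against $\beta^1_i$; for $k\ge2$, $L_i^k(\beta^1)$ is the set of $s_i$ that maximize expected utility against some $\beta_i\in\Delta(S_{-i})$ with $\beta_i(L^{k-1}_{-i}(\beta^1))=1$; $L^k(\beta^1)=\times_{i\in N}L^k_i(\beta^1)$. *)

theory Defs
  imports "HOL-Probability.Probability" "HOL-Library.Sublist"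
begin

text \<open>A history is a list of move profiles; at each stage every active player (possibly
nature) chooses an action (Some a), inactive players have None.\<close>

type_synonym ('i,'a) hist = "('i \<Rightarrow> 'a option) list"
type_synonym ('i,'a) strat = "('i,'a) hist \<Rightarrow> 'a"
type_synonym ('i,'a) prof = "'i \<Rightarrow> ('i,'a) strat"

record ('i,'a) efg =
  players :: "'i set"
  nature  :: 'i
  hists   :: "('i,'a) hist set"
  acts    :: "'i \<Rightarrow> ('i,'a) hist \<Rightarrow> 'a set"
  info    :: "'i \<Rightarrow> ('i,'a) hist \<Rightarrow> ('i,'a) hist set"
  pay     :: "'i \<Rightarrow> ('i,'a) hist \<Rightarrow> real"

definition allpl :: "('i,'a) efg \<Rightarrow> 'i set" where
  "allpl G = insert (nature G) (players G)"

definition active :: "('i,'a) efg \<Rightarrow> ('i,'a) hist \<Rightarrow> 'i set" where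
  "active G h = {j. acts G j h \<noteq> {}}"

definition moveprof :: "('i,'a) efg \<Rightarrow> ('i,'a) hist \<Rightarrow> ('i \<Rightarrow> 'a option) \<Rightarrow> bool" where
  "moveprof G h m \<longleftrightarrow> (\<forall>j. (j \<in> active G h \<longrightarrow> (\<exists>a\<in>acts G j h. m j = Some a))
                          \<and> (j \<notin> active G h \<longrightarrow> m j = None))"

definition terminals :: "('i,'a) efg \<Rightarrow> ('i,'a) hist set" where
  "terminals G = {h \<in> hists G. active G h = {}}"

definition exper :: "('i,'a) efg \<Rightarrow> 'i \<Rightarrow> ('i,'a) hist \<Rightarrow> (('i,'a) hist set \<times> 'a) list" where
  "exper G j h = [(info G j (take k h), the ((h ! k) j)). k \<leftarrow> [0..<length h], j \<in> active G (take k h)]"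

definition wf_efg :: "('i,'a) efg \<Rightarrow> bool" where
  "wf_efg G \<longleftrightarrow>
     finite (players G) \<and> nature G \<notin> players G \<and>
     finite (hists G) \<and> [] \<in> hists G \<and>
     (\<forall>h h'. h @ h' \<in> hists G \<longrightarrow> h \<in> hists G) \<and>
     (\<forall>h\<in>hists G. \<forall>m. h @ [m] \<in> hists G \<longleftrightarrow> active G h \<noteq> {} \<and> moveprof G h m) \<and>
     (\<forall>h\<in>hists G. active G h \<subseteq> allpl G) \<and>
     (\<forall>h\<in>hists G. nature G \<in> active G h \<longrightarrow> info G (nature G) h = {h}) \<and>
     (\<forall>j\<in>allpl G. \<forall>h\<in>hists G. j \<in> active G h \<longrightarrow>
         h \<in> info G j h \<and> info G j h \<subseteq> {h' \<in> hists G. j \<in> active G h'} \<and>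
         (\<forall>h'\<in>info G j h. info G j h' = info G j h \<and> acts G j h' = acts G j h)) \<and>
     \<comment> \<open>perfect recall\<close>
     (\<forall>j\<in>players G. \<forall>h\<in>hists G. j \<in> active G h \<longrightarrow>
         (\<forall>h'\<in>info G j h. exper G j h' = exper G j h))"

definition infosets :: "('i,'a) efg \<Rightarrow> 'i \<Rightarrow> ('i,'a) hist set set" where
  "infosets G i = {info G i h | h. h \<in> hists G \<and> i \<in> active G h}"

definition precedes :: "('i,'a) hist set \<Rightarrow> ('i,'a) hist set \<Rightarrow> bool" where
  "precedes I I' \<longleftrightarrow> (\<exists>h\<in>I. \<exists>h'\<in>I'. strict_prefix h h')"

text \<open>A strategy assigns an available action to each information set; represented as a
function on histories, constant on information sets, and undefined off the player's histories.\<close>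
definition strats :: "('i,'a) efg \<Rightarrow> 'i \<Rightarrow> ('i,'a) strat set" where
  "strats G j = {s. (\<forall>h\<in>hists G. j \<in> active G h \<longrightarrow>
                       s h \<in> acts G j h \<and> (\<forall>h'\<in>info G j h. s h' = s h)) \<and>
                   (\<forall>h. \<not> (h \<in> hists G \<and> j \<in> active G h) \<longrightarrow> s h = undefined)}"

definition profs :: "('i,'a) efg \<Rightarrow> ('i,'a) prof set" where
  "profs G = {s. \<forall>j. (j \<in> allpl G \<longrightarrow> s j \<in> strats G j) \<and> (j \<notin> allpl G \<longrightarrow> s j = undefined)}"

definition opps :: "('i,'a) efg \<Rightarrow> 'i \<Rightarrow> ('i,'a) prof set" where
  "opps G i = {s. \<forall>j. (j \<in> allpl G \<and> j \<noteq> i \<longrightarrow> s j \<in> strats G j) \<and>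
                      (\<not> (j \<in> allpl G \<and> j \<noteq> i) \<longrightarrow> s j = undefined)}"

definition mv :: "('i,'a) efg \<Rightarrow> ('i,'a) prof \<Rightarrow> ('i,'a) hist \<Rightarrow> ('i \<Rightarrow> 'a option)" where
  "mv G s h = (\<lambda>j. if j \<in> active G h then Some (s j h) else None)"

definition reaches :: "('i,'a) efg \<Rightarrow> ('i,'a) prof \<Rightarrow> ('i,'a) hist \<Rightarrow> bool" where
  "reaches G s h \<longleftrightarrow> h \<in> hists G \<and> (\<forall>k < length h. h ! k = mv G s (take k h))"

definition outcome :: "('i,'a) efg \<Rightarrow> ('i,'a) prof \<Rightarrow> ('i,'a) hist" where
  "outcome G s = (THE h. h \<in> terminals G \<and> reaches G s h)"

definition reachesI :: "('i,'a) efg \<Rightarrow> ('i,'a) prof \<Rightarrow> ('i,'a) hist set \<Rightarrow> bool" where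
  "reachesI G s I \<longleftrightarrow> (\<exists>h\<in>I. reaches G s h)"

definition opp_reaches :: "('i,'a) efg \<Rightarrow> 'i \<Rightarrow> ('i,'a) prof \<Rightarrow> ('i,'a) hist set \<Rightarrow> bool" where
  "opp_reaches G i \<sigma> I \<longleftrightarrow> (\<exists>si\<in>strats G i. reachesI G (\<sigma>(i := si)) I)"

definition strat_reaches :: "('i,'a) efg \<Rightarrow> 'i \<Rightarrow> ('i,'a) strat \<Rightarrow> ('i,'a) hist set \<Rightarrow> bool" where
  "strat_reaches G i si I \<longleftrightarrow> (\<exists>\<sigma>\<in>opps G i. reachesI G (\<sigma>(i := si)) I)"

definition oppsI :: "('i,'a) efg \<Rightarrow> 'i \<Rightarrow> ('i,'a) hist set \<Rightarrow> ('i,'a) prof set" where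
  "oppsI G i I = {\<sigma> \<in> opps G i. opp_reaches G i \<sigma> I}"

definition Zset :: "('i,'a) efg \<Rightarrow> ('i \<Rightarrow> ('i,'a) strat set) \<Rightarrow> ('i,'a) hist set" where
  "Zset G X = outcome G ` {s \<in> profs G. \<forall>j\<in>players G. s j \<in> X j}"

definition oppsX :: "('i,'a) efg \<Rightarrow> ('i \<Rightarrow> ('i,'a) strat set) \<Rightarrow> 'i \<Rightarrow> ('i,'a) prof set" where
  "oppsX G X i = {\<sigma> \<in> opps G i. \<forall>j\<in>players G. j \<noteq> i \<longrightarrow> \<sigma> j \<in> X j}"

definition EU :: "('i,'a) efg \<Rightarrow> 'i \<Rightarrow> ('i,'a) prof pmf \<Rightarrow> ('i,'a) strat \<Rightarrow> real" where
  "EU G i b si = measure_pmf.expectation b (\<lambda>\<sigma>. pay G i (outcome G (\<sigma>(i := si))))"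

type_synonym ('i,'a) bsys = "('i,'a) hist set \<Rightarrow> ('i,'a) prof pmf"

definition belief_systems :: "('i,'a) efg \<Rightarrow> 'i \<Rightarrow> ('i,'a) bsys set" where
  "belief_systems G i = {\<beta>. (\<forall>I\<in>infosets G i. set_pmf (\<beta> I) \<subseteq> oppsI G i I) \<and>
      (\<forall>I\<in>infosets G i. \<forall>I'\<in>infosets G i. precedes I I' \<and>
          measure_pmf.prob (\<beta> I) (oppsI G i I') > 0 \<longrightarrow>
          \<beta> I' = cond_pmf (\<beta> I) (oppsI G i I'))}"

definition full_support_bs :: "('i,'a) efg \<Rightarrow> 'i \<Rightarrow> ('i,'a) bsys \<Rightarrow> bool" where
  "full_support_bs G i \<beta> \<longleftrightarrow> (\<forall>I\<in>infosets G i. set_pmf (\<beta> I) = oppsI G i I)"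

definition replacement :: "('i,'a) efg \<Rightarrow> 'i \<Rightarrow> ('i,'a) hist set \<Rightarrow> ('i,'a) strat \<Rightarrow> ('i,'a) strat \<Rightarrow> bool" where
  "replacement G i I s' s \<longleftrightarrow> s' \<in> strats G i \<and>
     (\<forall>I'\<in>infosets G i. precedes I' I \<longrightarrow> (\<forall>h\<in>I'. s' h = s h))"

definition rational_at :: "('i,'a) efg \<Rightarrow> 'i \<Rightarrow> ('i,'a) bsys \<Rightarrow> ('i,'a) strat \<Rightarrow> ('i,'a) hist set \<Rightarrow> bool" where
  "rational_at G i \<beta> s I \<longleftrightarrow> \<not> strat_reaches G i s I \<or>
     (\<forall>s'. replacement G i I s' s \<longrightarrow> EU G i (\<beta> I) s' \<le> EU G i (\<beta> I) s)"

definition rational_all :: "('i,'a) efg \<Rightarrow> 'i \<Rightarrow> ('i,'a) bsys \<Rightarrow> ('i,'a) strat \<Rightarrow> bool" where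
  "rational_all G i \<beta> s \<longleftrightarrow> s \<in> strats G i \<and> (\<forall>I\<in>infosets G i. rational_at G i \<beta> s I)"

text \<open>Given the list ls = [L^1, ..., L^(k-1)] of previous levels, the belief sets B^k_i.\<close>
definition Bk :: "('i,'a) efg \<Rightarrow> ('i \<Rightarrow> ('i,'a) bsys) \<Rightarrow> ('i \<Rightarrow> ('i,'a) strat set) list \<Rightarrow> 'i \<Rightarrow> ('i,'a) bsys set" where
  "Bk G \<beta>1 ls i =
    (if ls = [] then {\<beta>1 i}
     else {\<beta> \<in> belief_systems G i. \<forall>I\<in>infosets G i.
        (if \<exists>l\<in>{1..length ls}. \<exists>\<sigma>\<in>oppsX G (ls ! (l - 1)) i. opp_reaches G i \<sigma> I
         then set_pmf (\<beta> I) \<subseteq> oppsX G (ls ! ((GREATEST l. l \<in> {1..length ls} \<and>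
                      (\<exists>\<sigma>\<in>oppsX G (ls ! (l - 1)) i. opp_reaches G i \<sigma> I)) - 1)) i
         else \<beta> I = \<beta>1 i I)})"

definition next_level :: "('i,'a) efg \<Rightarrow> ('i \<Rightarrow> ('i,'a) bsys) \<Rightarrow> ('i \<Rightarrow> ('i,'a) strat set) list \<Rightarrow> 'i \<Rightarrow> ('i,'a) strat set" where
  "next_level G \<beta>1 ls i = {s. \<exists>\<beta>\<in>Bk G \<beta>1 ls i. rational_all G i \<beta> s}"

primrec strong_levels :: "('i,'a) efg \<Rightarrow> ('i \<Rightarrow> ('i,'a) bsys) \<Rightarrow> nat \<Rightarrow> ('i \<Rightarrow> ('i,'a) strat set) list" where
  "strong_levels G \<beta>1 0 = []"
| "strong_levels G \<beta>1 (Suc n) = strong_levels G \<beta>1 n @ [next_level G \<beta>1 (strong_levels G \<beta>1 n)]"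

text \<open>\<open>strong_L G \<beta>1 k i\<close> is the set bar-L^k_i(bar-beta^1) (for k >= 1).\<close>
definition strong_L :: "('i,'a) efg \<Rightarrow> ('i \<Rightarrow> ('i,'a) bsys) \<Rightarrow> nat \<Rightarrow> 'i \<Rightarrow> ('i,'a) strat set" where
  "strong_L G \<beta>1 k = strong_levels G \<beta>1 k ! (k - 1)"

definition best_reply :: "('i,'a) efg \<Rightarrow> 'i \<Rightarrow> ('i,'a) prof pmf \<Rightarrow> ('i,'a) strat \<Rightarrow> bool" where
  "best_reply G i b s \<longleftrightarrow> s \<in> strats G i \<and> (\<forall>s'\<in>strats G i. EU G i b s' \<le> EU G i b s)"

fun nf_L :: "('i,'a) efg \<Rightarrow> ('i \<Rightarrow> ('i,'a) prof pmf) \<Rightarrow> nat \<Rightarrow> 'i \<Rightarrow> ('i,'a) strat set" where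
  "nf_L G b 0 i = strats G i"
| "nf_L G b (Suc 0) i = {s. best_reply G i (b i) s}"
| "nf_L G b (Suc (Suc n)) i =
     {s. \<exists>\<beta>. set_pmf \<beta> \<subseteq> oppsX G (nf_L G b (Suc n)) i \<and> best_reply G i \<beta> s}"

definition full_support_nf :: "('i,'a) efg \<Rightarrow> 'i \<Rightarrow> ('i,'a) prof pmf \<Rightarrow> bool" where
  "full_support_nf G i b \<longleftrightarrow> set_pmf b = opps G i"

definition consistent :: "('i,'a) efg \<Rightarrow> 'i \<Rightarrow> ('i,'a) prof pmf \<Rightarrow> ('i,'a) bsys \<Rightarrow> bool" where
  "consistent G i b \<beta> \<longleftrightarrow> (\<forall>I\<in>infosets G i. \<beta> I = cond_pmf b (oppsI G i I))"

end

theory Submission imports Defs begin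

locale game = fixes G :: "('i,'a) efg" assumes wf: "wf_efg G"
begin

lemmas W = wf[unfolded wf_efg_def]
lemma fin_players: "finite (players G)" using W by (elim conjE)
lemma nat_np: "nature G \<notin> players G" using W by (elim conjE)
lemma fin_hists: "finite (hists G)" using W by (elim conjE)
lemma nil_hist: "[] \<in> hists G" using W by (elim conjE)
lemma W5: "\<forall>h h'. h @ h' \<in> hists G \<longrightarrow> h \<in> hists G" using W by (elim conjE) assumption
lemma W6: "\<forall>h\<in>hists G. \<forall>m. h @ [m] \<in> hists G \<longleftrightarrow> active G h \<noteq> {} \<and> moveprof G h m"
  using W by (elim conjE) assumption
lemma W7: "\<forall>h\<in>hists G. active G h \<subseteq> allpl G" using W by (elim conjE) assumption
lemma W9: "\<forall>j\<in>allpl G. \<forall>h\<in>hists G. j \<in> active G h \<longrightarrow>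
         h \<in> info G j h \<and> info G j h \<subseteq> {h' \<in> hists G. j \<in> active G h'} \<and>
         (\<forall>h'\<in>info G j h. info G j h' = info G j h \<and> acts G j h' = acts G j h)"
  using W by (elim conjE) assumption
lemma W10: "\<forall>j\<in>players G. \<forall>h\<in>hists G. j \<in> active G h \<longrightarrow>
         (\<forall>h'\<in>info G j h. exper G j h' = exper G j h)"
  using W by (elim conjE) assumption
lemma hist_prefix: "h @ h' \<in> hists G \<Longrightarrow> h \<in> hists G" using W5 by blast
lemma hist_ext: "h \<in> hists G \<Longrightarrow> (h @ [m] \<in> hists G) = (active G h \<noteq> {} \<and> moveprof G h m)"
  using W6 by blast
lemma active_allpl: "h \<in> hists G \<Longrightarrow> active G h \<subseteq> allpl G" using W7 by blast
lemma info_props: "j \<in> allpl G \<Longrightarrow> h \<in> hists G \<Longrightarrow> j \<in> active G h \<Longrightarrow>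
   h \<in> info G j h \<and> info G j h \<subseteq> {h' \<in> hists G. j \<in> active G h'} \<and>
   (\<forall>h'\<in>info G j h. info G j h' = info G j h \<and> acts G j h' = acts G j h)"
  using W9 by blast
lemma recall: "j \<in> players G \<Longrightarrow> h \<in> hists G \<Longrightarrow> j \<in> active G h \<Longrightarrow> h' \<in> info G j h \<Longrightarrow>
   exper G j h' = exper G j h"
  using W10 by blast

lemma hist_take: "h \<in> hists G \<Longrightarrow> take k h \<in> hists G"
  using hist_prefix[of "take k h" "drop k h"] by simp

lemma pl_allpl: "i \<in> players G \<Longrightarrow> i \<in> allpl G" by (simp add: allpl_def)

definition vp :: "('i,'a) prof \<Rightarrow> bool" where
  "vp s \<longleftrightarrow> (\<forall>h\<in>hists G. \<forall>j\<in>active G h. s j h \<in> acts G j h)"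

lemma vp_upd: assumes "\<sigma> \<in> opps G i" "x \<in> strats G i" shows "vp (\<sigma>(i := x))"
  unfolding vp_def
proof (intro ballI)
  fix h j assume h: "h \<in> hists G" and j: "j \<in> active G h"
  then have "j \<in> allpl G" using active_allpl by blast
  show "(\<sigma>(i := x)) j h \<in> acts G j h"
  proof (cases "j = i")
    case True then show ?thesis using assms(2) h j by (simp add: strats_def)
  next
    case False then have "\<sigma> j \<in> strats G j" using assms(1) \<open>j \<in> allpl G\<close> by (simp add: opps_def)
    then show ?thesis using False h j by (simp add: strats_def)
  qed
qed

lemma vp_prof: "s \<in> profs G \<Longrightarrow> vp s"
  unfolding vp_def profs_def strats_def using active_allpl by blast

lemma mv_moveprof: "vp s \<Longrightarrow> h \<in> hists G \<Longrightarrow> moveprof G h (mv G s h)"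
  unfolding vp_def moveprof_def mv_def by auto

lemma reaches_take: "reaches G s h \<Longrightarrow> reaches G s (take k h)"
  unfolding reaches_def using hist_take by (auto simp: min_def)

lemma reaches_prefix:
  assumes "reaches G s h1" "reaches G s h2" "length h1 \<le> length h2"
  shows "h1 = take (length h1) h2"
proof -
  have "\<forall>k. k \<le> length h1 \<longrightarrow> take k h1 = take k h2"
  proof (intro allI)
    fix k show "k \<le> length h1 \<longrightarrow> take k h1 = take k h2"
    proof (induction k)
      case 0 then show ?case by simp
    next
      case (Suc k)
      show ?case
      proof
        assume k: "Suc k \<le> length h1"
        then have e: "take k h1 = take k h2" using Suc by simp
        have "h1 ! k = mv G s (take k h1)" using assms(1) k unfolding reaches_def by simp
        moreover have "h2 ! k = mv G s (take k h2)" using assms(2,3) k unfolding reaches_def by simp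
        ultimately have "h1 ! k = h2 ! k" using e by simp
        then show "take (Suc k) h1 = take (Suc k) h2"
          using e k assms(3) by (simp add: take_Suc_conv_app_nth)
      qed
    qed
  qed
  then show ?thesis by (metis order_refl take_all)
qed

lemma reaches_ext: assumes "reaches G s h" "vp s" "active G h \<noteq> {}"
  shows "reaches G s (h @ [mv G s h])"
proof -
  have h: "h \<in> hists G" using assms(1) reaches_def by blast
  have "h @ [mv G s h] \<in> hists G" using hist_ext[OF h] mv_moveprof[OF assms(2) h] assms(3) by simp
  then show ?thesis using assms(1) unfolding reaches_def by (auto simp: nth_append)
qed

lemma terminal_reached_exists: assumes "vp s" shows "\<exists>h. h \<in> terminals G \<and> reaches G s h"
proof -
  let ?R = "{h. reaches G s h}"
  have fin: "finite ?R" using fin_hists by (rule finite_subset[rotated]) (auto simp: reaches_def)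
  have ne: "[] \<in> ?R" using nil_hist by (simp add: reaches_def)
  define n where "n = Max (length ` ?R)"
  have "n \<in> length ` ?R" unfolding n_def using fin ne by (intro Max_in) auto
  then obtain h where h1: "h \<in> ?R" and hn: "length h = n" by blast
  have h2: "\<forall>h'\<in>?R. length h' \<le> length h" using fin hn unfolding n_def by auto
  note h = h1 h2
  show ?thesis
  proof (cases "active G h = {}")
    case True then show ?thesis using h by (auto simp: terminals_def reaches_def)
  next
    case False
    then have "h @ [mv G s h] \<in> ?R" using reaches_ext assms h by auto
    then show ?thesis using h(2) by fastforce
  qed
qed

lemma terminal_unique: assumes "reaches G s h1" "reaches G s h2" "h1 \<in> terminals G" "h2 \<in> terminals G"
  shows "h1 = h2"
proof -
  { fix a b assume ra: "reaches G s a" and rb: "reaches G s b" and ta: "a \<in> terminals G"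
       and len: "length a \<le> length b"
    have ab: "a = take (length a) b" using reaches_prefix[OF ra rb len] .
    have "a = b"
    proof (rule ccontr)
      assume "a \<noteq> b"
      then have lt: "length a < length b" using len ab
        by (metis le_neq_implies_less take_all_iff)
      have "take (Suc (length a)) b = a @ [b ! length a]" using ab lt by (metis take_Suc_conv_app_nth)
      moreover have "take (Suc (length a)) b \<in> hists G" using rb hist_take reaches_def by blast
      ultimately have "active G a \<noteq> {}" using hist_ext ta terminals_def by auto
      then show False using ta by (simp add: terminals_def)
    qed }
  then show ?thesis using assms nat_le_linear[of "length h1" "length h2"] by metis
qed

lemma outcome_props: assumes "vp s" shows "outcome G s \<in> terminals G \<and> reaches G s (outcome G s)"
proof -
  obtain h where h: "h \<in> terminals G" "reaches G s h" using terminal_reached_exists[OF assms] by blast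
  have "outcome G s = h" unfolding outcome_def
    using h terminal_unique by (intro the_equality) auto
  then show ?thesis using h by simp
qed

lemma outcome_eqI: "vp s \<Longrightarrow> h \<in> terminals G \<Longrightarrow> reaches G s h \<Longrightarrow> outcome G s = h"
  using outcome_props terminal_unique by blast

lemma outcome_same:
  assumes "vp s" "vp s'" "\<forall>k < length (outcome G s). mv G s' (take k (outcome G s)) = mv G s (take k (outcome G s))"
  shows "outcome G s' = outcome G s"
  using assms outcome_props[OF assms(1)] by (intro outcome_eqI) (auto simp: reaches_def)

lemma reached_prefix_terminal: assumes "reaches G s h" "reaches G s z" "z \<in> terminals G"
  shows "h = take (length h) z"
proof (cases "length h \<le> length z")
  case True then show ?thesis using reaches_prefix assms by blast
next
  case False
  then have "z = take (length z) h" using reaches_prefix assms by simp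
  moreover have "take (Suc (length z)) h \<in> hists G" using assms(1) hist_take reaches_def by blast
  moreover have "take (Suc (length z)) h = z @ [h ! length z]"
    using False \<open>z = take (length z) h\<close> by (metis not_le take_Suc_conv_app_nth)
  moreover have "z \<in> hists G" using assms(3) by (simp add: terminals_def)
  ultimately have "active G z \<noteq> {}" using hist_ext by auto
  then show ?thesis using assms(3) by (simp add: terminals_def)
qed



lemma infoset_mem: assumes "i \<in> players G" "I \<in> infosets G i" "h \<in> I"
  shows "h \<in> hists G \<and> i \<in> active G h \<and> info G i h = I"
proof -
  obtain h0 where h0: "h0 \<in> hists G" "i \<in> active G h0" "I = info G i h0"
    using assms(2) unfolding infosets_def by blast
  have P: "info G i h0 \<subseteq> {h' \<in> hists G. i \<in> active G h'}"
     "\<forall>h'\<in>info G i h0. info G i h' = info G i h0"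
    using info_props[OF pl_allpl[OF assms(1)] h0(1,2)] by blast+
  have hI: "h \<in> info G i h0" using h0(3) assms(3) by simp
  show ?thesis using P(1) hI P(2) h0(3) by blast
qed

lemma info_in_infosets: "h \<in> hists G \<Longrightarrow> i \<in> active G h \<Longrightarrow> info G i h \<in> infosets G i"
  unfolding infosets_def by blast

lemma set_exper: "set (exper G j h) =
   {(info G j (take k h), the ((h!k) j)) | k. k < length h \<and> j \<in> active G (take k h)}"
  unfolding exper_def by (auto split: if_splits)

lemma strict_prefix_take: "strict_prefix a b \<longleftrightarrow> (\<exists>k < length b. a = take k b)"
proof
  assume "strict_prefix a b"
  then show "\<exists>k < length b. a = take k b"
    by (metis append_eq_conv_conj prefix_def prefix_length_less strict_prefix_def)
next
  assume "\<exists>k < length b. a = take k b"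
  then obtain k where "k < length b" "a = take k b" by blast
  then show "strict_prefix a b"
    by (metis append_take_drop_id length_take less_not_refl min.absorb4 prefixI prefix_order.dual_order.not_eq_order_implies_strict)
qed

lemma recall_prefix:
  assumes i: "i \<in> players G" and I: "I \<in> infosets G i" and h: "h \<in> I" and h2: "h2 \<in> I"
    and k0: "k0 < length h2" "i \<in> active G (take k0 h2)"
  shows "\<exists>k < length h. i \<in> active G (take k h) \<and> info G i (take k h) = info G i (take k0 h2)
     \<and> the ((h!k) i) = the ((h2!k0) i)"
proof -
  have m: "h \<in> hists G" "i \<in> active G h" "info G i h = I" using infoset_mem[OF i I h] by auto
  have m2: "h2 \<in> hists G" "i \<in> active G h2" "info G i h2 = I" using infoset_mem[OF i I h2] by auto
  have "exper G i h = exper G i h2" using recall[OF i m2(1,2)] h m2(3) by simp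
  moreover have "(info G i (take k0 h2), the ((h2!k0) i)) \<in> set (exper G i h2)"
    unfolding set_exper using k0 by blast
  ultimately have "(info G i (take k0 h2), the ((h2!k0) i)) \<in> set (exper G i h)" by simp
  then show ?thesis unfolding set_exper by auto
qed

lemma no_prefix_same_infoset:
  assumes i: "i \<in> players G" and I: "I \<in> infosets G i"
  shows "h0 \<in> I \<Longrightarrow> h \<in> I \<Longrightarrow> strict_prefix h0 h \<Longrightarrow> False"
proof (induction h0 arbitrary: h rule: length_induct)
  case (1 h0)
  obtain n where n: "n < length h" "h0 = take n h" using 1(4) strict_prefix_take by blast
  have ln: "length h0 = n" using n by simp
  have m0: "h0 \<in> hists G" "i \<in> active G h0" "info G i h0 = I" using infoset_mem[OF i I 1(2)] by auto
  obtain k where k: "k < length h0" "i \<in> active G (take k h0)" "info G i (take k h0) = info G i (take n h)"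
    using recall_prefix[OF i I 1(2) 1(3), of n] n m0 by auto
  have "take k h0 \<in> info G i (take k h0)"
    using info_props[OF pl_allpl[OF i] hist_take[OF m0(1)] k(2)] by blast
  then have "take k h0 \<in> I" using k(3) n m0 by simp
  moreover have "strict_prefix (take k h0) h0" using k(1) strict_prefix_take by blast
  ultimately show False using 1(1) k(1) 1(2) by (metis length_take min.absorb4 nat_less_le)
qed

lemma precedesD:
  assumes i: "i \<in> players G" and J: "J \<in> infosets G i" and I: "I \<in> infosets G i"
    and p: "precedes J I" and h: "h \<in> I"
  shows "\<exists>k < length h. i \<in> active G (take k h) \<and> info G i (take k h) = J"
proof -
  obtain h1 h2 where h12: "h1 \<in> J" "h2 \<in> I" "strict_prefix h1 h2" using p unfolding precedes_def by blast
  obtain k0 where k0: "k0 < length h2" "h1 = take k0 h2" using h12(3) strict_prefix_take by blast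
  have m1: "i \<in> active G h1" "info G i h1 = J" using infoset_mem[OF i J h12(1)] by auto
  show ?thesis using recall_prefix[OF i I h h12(2) k0(1)] m1 k0 by auto
qed

lemma acts_finite: assumes h: "h \<in> hists G" shows "finite (acts G j h)"
proof (cases "j \<in> active G h")
  case False then show ?thesis by (simp add: active_def)
next
  case True
  define m where "m a = (\<lambda>j'. if j' \<in> active G h then Some (if j' = j then a else SOME b. b \<in> acts G j' h) else None)" for a
  have "\<And>a. a \<in> acts G j h \<Longrightarrow> h @ [m a] \<in> hists G"
  proof -
    fix a assume a: "a \<in> acts G j h"
    have "moveprof G h (m a)" unfolding moveprof_def
    proof (intro allI conjI impI)
      fix j' assume j': "j' \<in> active G h"
      show "\<exists>a'\<in>acts G j' h. m a j' = Some a'"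
      proof (cases "j' = j")
        case True then show ?thesis using a j' by (simp add: m_def)
      next
        case False
        have "acts G j' h \<noteq> {}" using j' by (simp add: active_def)
        then have "(SOME b. b \<in> acts G j' h) \<in> acts G j' h" by (meson ex_in_conv someI_ex)
        then show ?thesis using False j' by (simp add: m_def)
      qed
    next
      fix j' assume "j' \<notin> active G h" then show "m a j' = None" by (simp add: m_def)
    qed
    then show "h @ [m a] \<in> hists G" using hist_ext[OF h] True by auto
  qed
  then have "(\<lambda>a. h @ [m a]) ` acts G j h \<subseteq> hists G" by blast
  moreover have "inj_on (\<lambda>a. h @ [m a]) (acts G j h)"
  proof (rule inj_onI)
    fix a b assume "h @ [m a] = h @ [m b]"
    then have "m a = m b" by simp
    then have "m a j = m b j" by simp
    then show "a = b" using True by (simp add: m_def)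
  qed
  ultimately show ?thesis using fin_hists by (meson finite_imageD finite_subset)
qed

lemma strats_finite: "finite (strats G j)"
proof -
  have "strats G j \<subseteq> PiE (hists G) (\<lambda>h. insert undefined (acts G j h))"
  proof
    fix s assume s: "s \<in> strats G j"
    have a: "\<forall>h\<in>hists G. j \<in> active G h \<longrightarrow> s h \<in> acts G j h"
      and b: "\<forall>h. \<not> (h \<in> hists G \<and> j \<in> active G h) \<longrightarrow> s h = undefined"
      using s unfolding strats_def by blast+
    show "s \<in> PiE (hists G) (\<lambda>h. insert undefined (acts G j h))"
    proof (rule PiE_I)
      fix h assume "h \<in> hists G" then show "s h \<in> insert undefined (acts G j h)"
        using a b by (cases "j \<in> active G h") auto
    next
      fix h assume "h \<notin> hists G" then show "s h = undefined" using b by blast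
    qed
  qed
  moreover have "finite (PiE (hists G) (\<lambda>h. insert undefined (acts G j h)))"
    using fin_hists acts_finite by (intro finite_PiE) auto
  ultimately show ?thesis by (rule finite_subset)
qed

lemma allpl_finite: "finite (allpl G)" using fin_players by (simp add: allpl_def)

lemma opps_finite: "finite (opps G i)"
proof -
  have "opps G i \<subseteq> PiE (allpl G) (\<lambda>j. insert undefined (strats G j))"
  proof
    fix s assume s: "s \<in> opps G i"
    have a: "\<forall>j. (j \<in> allpl G \<and> j \<noteq> i \<longrightarrow> s j \<in> strats G j) \<and> (\<not> (j \<in> allpl G \<and> j \<noteq> i) \<longrightarrow> s j = undefined)"
      using s unfolding opps_def by blast
    show "s \<in> PiE (allpl G) (\<lambda>j. insert undefined (strats G j))"
    proof (rule PiE_I)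
      fix j assume "j \<in> allpl G" then show "s j \<in> insert undefined (strats G j)"
        using a by (cases "j = i") auto
    next
      fix j assume "j \<notin> allpl G" then show "s j = undefined" using a by blast
    qed
  qed
  moreover have "finite (PiE (allpl G) (\<lambda>j. insert undefined (strats G j)))"
    using allpl_finite strats_finite by (intro finite_PiE) auto
  ultimately show ?thesis by (rule finite_subset)
qed

lemma infosets_finite: "finite (infosets G i)"
proof -
  have "infosets G i = (\<lambda>h. info G i h) ` {h \<in> hists G. i \<in> active G h}" unfolding infosets_def by blast
  then show ?thesis using fin_hists by simp
qed

definition cstrat :: "'i \<Rightarrow> ('i,'a) strat" where
  "cstrat j h = (if h \<in> hists G \<and> j \<in> active G h then SOME a. a \<in> acts G j h else undefined)"

lemma cstrat_act: "h \<in> hists G \<Longrightarrow> j \<in> active G h \<Longrightarrow> cstrat j h \<in> acts G j h"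
proof -
  assume h: "h \<in> hists G" and a: "j \<in> active G h"
  then have "acts G j h \<noteq> {}" by (simp add: active_def)
  then have "(SOME b. b \<in> acts G j h) \<in> acts G j h" by (meson ex_in_conv someI_ex)
  then show ?thesis using h a by (simp add: cstrat_def)
qed

lemma cstrat_in: "cstrat j \<in> strats G j"
proof -
  have A: "\<forall>h\<in>hists G. j \<in> active G h \<longrightarrow> cstrat j h \<in> acts G j h \<and> (\<forall>h'\<in>info G j h. cstrat j h' = cstrat j h)"
  proof (intro ballI impI conjI)
    fix h assume h: "h \<in> hists G" and a: "j \<in> active G h"
    show "cstrat j h \<in> acts G j h" using cstrat_act h a .
    fix h' assume h': "h' \<in> info G j h"
    have "j \<in> allpl G" using active_allpl h a by blast
    from info_props[OF this h a] h' have "h' \<in> hists G" "j \<in> active G h'" "acts G j h' = acts G j h"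
      by blast+
    then show "cstrat j h' = cstrat j h" using h a by (simp add: cstrat_def)
  qed
  have B: "\<forall>h. \<not> (h \<in> hists G \<and> j \<in> active G h) \<longrightarrow> cstrat j h = undefined"
    by (simp add: cstrat_def)
  show ?thesis unfolding strats_def using A B by blast
qed

lemma strats_ne: "strats G j \<noteq> {}" using cstrat_in by blast


lemma reach_change: "reaches G s h \<Longrightarrow> (\<forall>k < length h. mv G s' (take k h) = mv G s (take k h)) \<Longrightarrow> reaches G s' h"
  unfolding reaches_def by simp

lemma mv_upd_eq: "(i \<in> active G h \<Longrightarrow> y h = x h) \<Longrightarrow> mv G (\<sigma>(i := y)) h = mv G (\<sigma>(i := x)) h"
  unfolding mv_def by (rule ext) auto

lemma reach_nth: "reaches G s h \<Longrightarrow> k < length h \<Longrightarrow> j \<in> active G (take k h) \<Longrightarrow> the ((h!k) j) = s j (take k h)"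
  unfolding reaches_def mv_def by simp

definition init :: "'i \<Rightarrow> ('i,'a) hist set \<Rightarrow> bool" where
  "init i I \<longleftrightarrow> I \<in> infosets G i \<and> (\<forall>J\<in>infosets G i. \<not> precedes J I)"

lemma strat_const: "s \<in> strats G j \<Longrightarrow> h \<in> hists G \<Longrightarrow> j \<in> active G h \<Longrightarrow> h' \<in> info G j h \<Longrightarrow> s h' = s h"
  unfolding strats_def by blast

lemma strat_act: "s \<in> strats G j \<Longrightarrow> h \<in> hists G \<Longrightarrow> j \<in> active G h \<Longrightarrow> s h \<in> acts G j h"
  unfolding strats_def by blast

lemma take_in_info: "i \<in> players G \<Longrightarrow> h \<in> hists G \<Longrightarrow> i \<in> active G (take k h) \<Longrightarrow> take k h \<in> info G i (take k h)"
  using info_props[OF pl_allpl hist_take] by blast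

lemma prec_take: assumes "i \<in> players G" "I \<in> infosets G i" "h \<in> I" "k < length h" "i \<in> active G (take k h)"
  shows "precedes (info G i (take k h)) I"
proof -
  have "h \<in> hists G" using infoset_mem assms by blast
  then have "take k h \<in> info G i (take k h)" using take_in_info assms by blast
  moreover have "strict_prefix (take k h) h" using assms(4) strict_prefix_take by blast
  ultimately show ?thesis unfolding precedes_def using assms(3) by blast
qed

lemma reach_repl:
  assumes i: "i \<in> players G" and I: "I \<in> infosets G i" and s: "s \<in> strats G i"
    and h: "h \<in> I" and r: "reaches G (\<sigma>(i := x)) h"
    and sr: "strat_reaches G i s I"
    and y: "\<forall>J\<in>infosets G i. precedes J I \<longrightarrow> (\<forall>h'\<in>J. y h' = s h')"
  shows "reaches G (\<sigma>(i := y)) h"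
proof -
  obtain \<sigma>0 h0 where h0: "h0 \<in> I" "reaches G (\<sigma>0(i := s)) h0"
    using sr unfolding strat_reaches_def reachesI_def by blast
  have hh: "h \<in> hists G" using r reaches_def by blast
  have h0h: "h0 \<in> hists G" using h0 reaches_def by blast
  show ?thesis
  proof (rule reach_change[OF r], intro allI impI)
    fix k assume k: "k < length h"
    show "mv G (\<sigma>(i := y)) (take k h) = mv G (\<sigma>(i := x)) (take k h)"
    proof (rule mv_upd_eq)
      assume a: "i \<in> active G (take k h)"
      define J where "J = info G i (take k h)"
      have J: "J \<in> infosets G i" unfolding J_def using info_in_infosets hist_take[OF hh] a by blast
      have pJ: "precedes J I" unfolding J_def using prec_take[OF i I h k a] .
      have tJ: "take k h \<in> J" unfolding J_def using take_in_info[OF i hh a] .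
      obtain k' where k': "k' < length h0" "i \<in> active G (take k' h0)" "info G i (take k' h0) = J"
        "the ((h0!k') i) = the ((h!k) i)"
        using recall_prefix[OF i I h0(1) h k a] unfolding J_def by blast
      have e1: "the ((h!k) i) = x (take k h)" using reach_nth[OF r k a] by simp
      have e2: "the ((h0!k') i) = s (take k' h0)" using reach_nth[OF h0(2) k'(1,2)] by simp
      have e3: "s (take k h) = s (take k' h0)"
        using strat_const[OF s hist_take[OF h0h] k'(2)] tJ k'(3) by simp
      have e4: "y (take k h) = s (take k h)" using y J pJ tJ by blast
      show "y (take k h) = x (take k h)" using e1 e2 e3 e4 k'(4) by simp
    qed
  qed
qed

lemma reach_init:
  assumes i: "i \<in> players G" and I: "init i I" and h: "h \<in> I" and r: "reaches G (\<sigma>(i := x)) h"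
  shows "reaches G (\<sigma>(i := y)) h"
proof (rule reach_change[OF r], intro allI impI)
  fix k assume k: "k < length h"
  show "mv G (\<sigma>(i := y)) (take k h) = mv G (\<sigma>(i := x)) (take k h)"
  proof (rule mv_upd_eq)
    assume a: "i \<in> active G (take k h)"
    have hh: "h \<in> hists G" using r reaches_def by blast
    have "info G i (take k h) \<in> infosets G i" using info_in_infosets hist_take[OF hh] a by blast
    moreover have "precedes (info G i (take k h)) I" using prec_take[OF i _ h k a] I init_def by blast
    ultimately show "y (take k h) = x (take k h)" using I init_def by blast
  qed
qed

lemma init_unique:
  assumes i: "i \<in> players G" and I: "init i I" and I': "init i I'" and h: "h \<in> I" and h': "h' \<in> I'"
    and r: "reaches G (\<sigma>(i := x)) h" and r': "reaches G (\<sigma>(i := y)) h'"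
  shows "I = I'"
proof -
  have r2: "reaches G (\<sigma>(i := x)) h'" using reach_init[OF i I' h' r'] .
  have mI: "info G i h = I" using infoset_mem[OF i _ h] I init_def by blast
  have mI': "info G i h' = I'" using infoset_mem[OF i _ h'] I' init_def by blast
  have "h = h'"
  proof (cases "length h \<le> length h'")
    case True
    then have e: "h = take (length h) h'" using reaches_prefix[OF r r2] by blast
    show ?thesis
    proof (rule ccontr)
      assume "h \<noteq> h'"
      then have "length h < length h'" using True e by (metis le_neq_implies_less take_all_iff)
      then have "strict_prefix h h'" using e strict_prefix_take by blast
      then have "precedes I I'" unfolding precedes_def using h h' by blast
      then show False using I I' init_def by blast
    qed
  next
    case False
    then have e: "h' = take (length h') h" using reaches_prefix[OF r2 r] by simp
    then have "strict_prefix h' h" using False strict_prefix_take by (metis not_le)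
    then have "precedes I' I" unfolding precedes_def using h h' by blast
    then show ?thesis using I I' init_def by blast
  qed
  then show ?thesis using mI mI' by simp
qed

lemma reach_to_init:
  assumes i: "i \<in> players G" and r: "reaches G s h" and a: "i \<in> active G h"
  shows "\<exists>I. init i I \<and> (\<exists>h'\<in>I. reaches G s h')"
proof -
  have hh: "h \<in> hists G" using r reaches_def by blast
  define n where "n = (LEAST n. i \<in> active G (take n h))"
  have an: "i \<in> active G (take n h)" unfolding n_def by (rule LeastI[of _ "length h"]) (simp add: a)
  have nmin: "\<And>m. i \<in> active G (take m h) \<Longrightarrow> n \<le> m" unfolding n_def by (rule Least_le)
  define J where "J = info G i (take n h)"
  have J: "J \<in> infosets G i" unfolding J_def using info_in_infosets hist_take[OF hh] an by blast
  have tJ: "take n h \<in> J" unfolding J_def using take_in_info[OF i hh an] .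
  have "init i J" unfolding init_def
  proof (intro conjI ballI notI)
    show "J \<in> infosets G i" using J .
    fix K assume K: "K \<in> infosets G i" and p: "precedes K J"
    obtain k where k: "k < length (take n h)" "i \<in> active G (take k (take n h))"
      using precedesD[OF i K J p tJ] by blast
    have "i \<in> active G (take k h)" using k by (simp add: min_def split: if_splits)
    then have "n \<le> k" using nmin by blast
    then show False using k(1) by simp
  qed
  moreover have "reaches G s (take n h)" using reaches_take[OF r] .
  ultimately show ?thesis using tJ by blast
qed

lemma no_reach_outcome:
  assumes i: "i \<in> players G" and \<sigma>: "\<sigma> \<in> opps G i" and x: "x \<in> strats G i" and y: "y \<in> strats G i"
    and nr: "\<forall>I\<in>infosets G i. \<not> reachesI G (\<sigma>(i := x)) I"
  shows "outcome G (\<sigma>(i := y)) = outcome G (\<sigma>(i := x))"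
proof (rule outcome_same[OF vp_upd[OF \<sigma> x] vp_upd[OF \<sigma> y]], intro allI impI)
  let ?z = "outcome G (\<sigma>(i := x))"
  have rz: "reaches G (\<sigma>(i := x)) ?z" using outcome_props[OF vp_upd[OF \<sigma> x]] by blast
  have hz: "?z \<in> hists G" using rz reaches_def by blast
  fix k assume k: "k < length ?z"
  show "mv G (\<sigma>(i := y)) (take k ?z) = mv G (\<sigma>(i := x)) (take k ?z)"
  proof (rule mv_upd_eq)
    assume a: "i \<in> active G (take k ?z)"
    have "info G i (take k ?z) \<in> infosets G i" using info_in_infosets hist_take[OF hz] a by blast
    moreover have "reachesI G (\<sigma>(i := x)) (info G i (take k ?z))"
      unfolding reachesI_def using take_in_info[OF i hz a] reaches_take[OF rz] by blast
    ultimately show "y (take k ?z) = x (take k ?z)" using nr by blast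
  qed
qed


abbreviation u :: "'i \<Rightarrow> ('i,'a) prof \<Rightarrow> ('i,'a) strat \<Rightarrow> real" where
  "u i \<sigma> x \<equiv> pay G i (outcome G (\<sigma>(i := x)))"

lemma EU_sum: "finite A \<Longrightarrow> set_pmf p \<subseteq> A \<Longrightarrow> EU G i p x = (\<Sum>\<sigma>\<in>A. pmf p \<sigma> * u i \<sigma> x)"
  unfolding EU_def by (subst integral_measure_pmf[of A]) auto

lemma EU_cond:
  assumes A: "finite A" "set_pmf p \<subseteq> A" and ne: "set_pmf p \<inter> B \<noteq> {}"
  shows "EU G i (cond_pmf p B) x = (\<Sum>\<sigma>\<in>A \<inter> B. pmf p \<sigma> * u i \<sigma> x) / measure_pmf.prob p B"
proof -
  have "EU G i (cond_pmf p B) x = (\<Sum>\<sigma>\<in>A. pmf (cond_pmf p B) \<sigma> * u i \<sigma> x)"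
    using A ne by (intro EU_sum) auto
  also have "\<dots> = (\<Sum>\<sigma>\<in>A. (if \<sigma> \<in> B then pmf p \<sigma> * u i \<sigma> x / measure_pmf.prob p B else 0))"
    by (intro sum.cong refl) (simp add: pmf_cond[OF ne])
  also have "\<dots> = (\<Sum>\<sigma>\<in>A \<inter> B. pmf p \<sigma> * u i \<sigma> x / measure_pmf.prob p B)"
    using A(1) by (simp add: sum.If_cases Int_commute)
  also have "\<dots> = (\<Sum>\<sigma>\<in>A \<inter> B. pmf p \<sigma> * u i \<sigma> x) / measure_pmf.prob p B"
    by (simp add: sum_divide_distrib)
  finally show ?thesis .
qed

definition splice :: "('i,'a) hist set \<Rightarrow> ('i,'a) strat \<Rightarrow> ('i,'a) strat \<Rightarrow> ('i,'a) strat" where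
  "splice I s' s h = (if \<exists>h0\<in>I. prefix h0 h then s' h else s h)"

lemma prefix_iff_same:
  assumes i: "i \<in> players G" and I: "I \<in> infosets G i" and h: "h \<in> hists G" and a: "i \<in> active G h"
    and h': "h' \<in> info G i h" and p: "h0 \<in> I" "prefix h0 h"
  shows "\<exists>h1\<in>I. prefix h1 h'"
proof (cases "h0 = h")
  case True
  then have "info G i h = I" using infoset_mem[OF i I p(1)] by simp
  then show ?thesis using h' by blast
next
  case False
  then have sp: "strict_prefix h0 h" using p(2) by (simp add: strict_prefix_def)
  have J: "info G i h \<in> infosets G i" using info_in_infosets h a by blast
  have hJ: "h \<in> info G i h" using info_props[OF pl_allpl[OF i] h a] by blast
  have "precedes I (info G i h)" unfolding precedes_def using p(1) hJ sp by blast
  then obtain k where k: "k < length h'" "i \<in> active G (take k h')" "info G i (take k h') = I"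
    using precedesD[OF i I J _ h'] by blast
  have h'h: "h' \<in> hists G" using info_props[OF pl_allpl[OF i] h a] h' by blast
  have "take k h' \<in> I" using take_in_info[OF i h'h k(2)] k(3) by simp
  moreover have "prefix (take k h') h'" by (simp add: take_is_prefix)
  ultimately show ?thesis by blast
qed

lemma splice_strat:
  assumes i: "i \<in> players G" and I: "I \<in> infosets G i" and s: "s \<in> strats G i" and s': "s' \<in> strats G i"
  shows "splice I s' s \<in> strats G i"
proof -
  have A: "\<forall>h\<in>hists G. i \<in> active G h \<longrightarrow> splice I s' s h \<in> acts G i h \<and>
      (\<forall>h'\<in>info G i h. splice I s' s h' = splice I s' s h)"
  proof (intro ballI impI conjI)
    fix h assume h: "h \<in> hists G" and a: "i \<in> active G h"
    show "splice I s' s h \<in> acts G i h" using strat_act[OF s h a] strat_act[OF s' h a]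
      by (simp add: splice_def)
    fix h' assume h': "h' \<in> info G i h"
    have P: "h' \<in> hists G" "i \<in> active G h'" "info G i h' = info G i h"
      using info_props[OF pl_allpl[OF i] h a] h' by blast+
    have hself: "h \<in> info G i h" using info_props[OF pl_allpl[OF i] h a] by blast
    have hh': "h \<in> info G i h'" using P(3) hself by simp
    have e1: "\<And>h0. h0 \<in> I \<Longrightarrow> prefix h0 h \<Longrightarrow> \<exists>h1\<in>I. prefix h1 h'"
      using prefix_iff_same[OF i I h a h'] by blast
    have e2: "\<And>h0. h0 \<in> I \<Longrightarrow> prefix h0 h' \<Longrightarrow> \<exists>h1\<in>I. prefix h1 h"
      using prefix_iff_same[OF i I P(1) P(2) hh'] by blast
    have eq: "(\<exists>h0\<in>I. prefix h0 h') = (\<exists>h0\<in>I. prefix h0 h)"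
      using e1 e2 by blast
    have "s h' = s h" using strat_const[OF s h a h'] .
    moreover have "s' h' = s' h" using strat_const[OF s' h a h'] .
    ultimately show "splice I s' s h' = splice I s' s h" unfolding splice_def using eq by simp
  qed
  have B: "\<forall>h. \<not> (h \<in> hists G \<and> i \<in> active G h) \<longrightarrow> splice I s' s h = undefined"
  proof (intro allI impI)
    fix h assume "\<not> (h \<in> hists G \<and> i \<in> active G h)"
    moreover have "\<forall>h. \<not> (h \<in> hists G \<and> i \<in> active G h) \<longrightarrow> s h = undefined"
      "\<forall>h. \<not> (h \<in> hists G \<and> i \<in> active G h) \<longrightarrow> s' h = undefined"
      using s s' unfolding strats_def by blast+
    ultimately show "splice I s' s h = undefined" unfolding splice_def by simp
  qed
  show ?thesis unfolding strats_def using A B by blast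
qed

lemma splice_out:
  assumes i: "i \<in> players G" and \<sigma>: "\<sigma> \<in> opps G i" and s: "s \<in> strats G i" and s': "s' \<in> strats G i"
    and I: "I \<in> infosets G i" and nr: "\<not> opp_reaches G i \<sigma> I"
  shows "u i \<sigma> (splice I s' s) = u i \<sigma> s"
proof -
  have sp: "splice I s' s \<in> strats G i" using splice_strat[OF i I s s'] .
  let ?z = "outcome G (\<sigma>(i := s))"
  have rz: "reaches G (\<sigma>(i := s)) ?z" using outcome_props[OF vp_upd[OF \<sigma> s]] by blast
  have "outcome G (\<sigma>(i := splice I s' s)) = ?z"
  proof (rule outcome_same[OF vp_upd[OF \<sigma> s] vp_upd[OF \<sigma> sp]], intro allI impI)
    fix k assume k: "k < length ?z"
    show "mv G (\<sigma>(i := splice I s' s)) (take k ?z) = mv G (\<sigma>(i := s)) (take k ?z)"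
    proof (rule mv_upd_eq)
      show "splice I s' s (take k ?z) = s (take k ?z)"
      proof (cases "\<exists>h0\<in>I. prefix h0 (take k ?z)")
        case True
        then obtain h0 where h0: "h0 \<in> I" "prefix h0 (take k ?z)" by blast
        then have "h0 = take (length h0) (take k ?z)" by (metis append_eq_conv_conj prefix_def)
        then have "reaches G (\<sigma>(i := s)) h0" using reaches_take[OF reaches_take[OF rz]] by metis
        then have "opp_reaches G i \<sigma> I" unfolding opp_reaches_def reachesI_def using s h0(1) by blast
        then show ?thesis using nr by blast
      next
        case False then show ?thesis by (simp add: splice_def)
      qed
    qed
  qed
  then show ?thesis by simp
qed

lemma splice_in:
  assumes i: "i \<in> players G" and \<sigma>: "\<sigma> \<in> opps G i" and s: "s \<in> strats G i"
    and I: "I \<in> infosets G i" and r: "opp_reaches G i \<sigma> I"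
    and sr: "strat_reaches G i s I" and rep: "replacement G i I s' s"
  shows "u i \<sigma> (splice I s' s) = u i \<sigma> s'"
proof -
  have s': "s' \<in> strats G i" using rep unfolding replacement_def by blast
  have y: "\<forall>J\<in>infosets G i. precedes J I \<longrightarrow> (\<forall>h'\<in>J. s' h' = s h')" using rep unfolding replacement_def by blast
  have sp: "splice I s' s \<in> strats G i" using splice_strat[OF i I s s'] .
  obtain x h where xh: "x \<in> strats G i" "h \<in> I" "reaches G (\<sigma>(i := x)) h"
    using r unfolding opp_reaches_def reachesI_def by blast
  have rh: "reaches G (\<sigma>(i := s')) h" using reach_repl[OF i I s xh(2,3) sr y] .
  let ?z = "outcome G (\<sigma>(i := s'))"
  have oz: "?z \<in> terminals G" "reaches G (\<sigma>(i := s')) ?z" using outcome_props[OF vp_upd[OF \<sigma> s']] by blast+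
  have hz: "h = take (length h) ?z" using reached_prefix_terminal[OF rh oz(2,1)] .
  have hh: "h \<in> hists G" using rh reaches_def by blast
  have "outcome G (\<sigma>(i := splice I s' s)) = ?z"
  proof (rule outcome_same[OF vp_upd[OF \<sigma> s'] vp_upd[OF \<sigma> sp]], intro allI impI)
    fix k assume k: "k < length ?z"
    show "mv G (\<sigma>(i := splice I s' s)) (take k ?z) = mv G (\<sigma>(i := s')) (take k ?z)"
    proof (rule mv_upd_eq)
      assume a: "i \<in> active G (take k ?z)"
      show "splice I s' s (take k ?z) = s' (take k ?z)"
      proof (cases "length h \<le> k")
        case True
        have "take (length h) (take k ?z) = take (length h) ?z" using True by (simp add: min_def)
        then have "h = take (length h) (take k ?z)" using hz by simp
        then have "prefix h (take k ?z)" by (metis take_is_prefix)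
        then have "\<exists>h0\<in>I. prefix h0 (take k ?z)" using xh(2) by blast
        then show ?thesis unfolding splice_def by simp
      next
        case False
        have "take k h = take k (take (length h) ?z)" using hz by simp
        then have tk: "take k ?z = take k h" using False by (simp add: min_def)
        have kh: "k < length h" using False by simp
        have nop: "\<not> (\<exists>h0\<in>I. prefix h0 (take k h))"
        proof
          assume "\<exists>h0\<in>I. prefix h0 (take k h)"
          then obtain h0 where h0: "h0 \<in> I" "prefix h0 (take k h)" by blast
          have "strict_prefix (take k h) h" using kh strict_prefix_take by blast
          then have "strict_prefix h0 h" using h0(2) prefix_order.le_less_trans by blast
          then show False using no_prefix_same_infoset[OF i I h0(1) xh(2)] by blast
        qed
        have ak: "i \<in> active G (take k h)" using a tk by simp
        have "precedes (info G i (take k h)) I" using prec_take[OF i I xh(2) kh ak] .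
        moreover have "info G i (take k h) \<in> infosets G i" using info_in_infosets hist_take[OF hh] ak by blast
        moreover have "take k h \<in> info G i (take k h)" using take_in_info[OF i hh ak] .
        ultimately have "s' (take k h) = s (take k h)" using y by blast
        then show ?thesis using nop tk by (simp add: splice_def)
      qed
    qed
  qed
  then show ?thesis by simp
qed


lemma pos_of_ne: "set_pmf p \<inter> B \<noteq> {} \<Longrightarrow> measure_pmf.prob p B > 0"
proof -
  assume "set_pmf p \<inter> B \<noteq> {}"
  then obtain x where "x \<in> set_pmf p" "x \<in> B" by blast
  then show ?thesis by (rule measure_pmf_posI)
qed

lemma EU_splice_diff:
  assumes i: "i \<in> players G" and A: "finite A" "set_pmf p \<subseteq> A" "A \<subseteq> opps G i"
    and I: "I \<in> infosets G i" and s: "s \<in> strats G i" and sr: "strat_reaches G i s I"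
    and rep: "replacement G i I s' s"
  shows "EU G i p (splice I s' s) - EU G i p s = (\<Sum>\<sigma>\<in>A \<inter> oppsI G i I. pmf p \<sigma> * (u i \<sigma> s' - u i \<sigma> s))"
proof -
  have s': "s' \<in> strats G i" using rep unfolding replacement_def by blast
  let ?f = "\<lambda>\<sigma>. pmf p \<sigma> * (u i \<sigma> (splice I s' s) - u i \<sigma> s)"
  have "EU G i p (splice I s' s) - EU G i p s = (\<Sum>\<sigma>\<in>A. ?f \<sigma>)"
    using EU_sum[OF A(1,2)] by (simp add: sum_subtractf right_diff_distrib)
  also have "\<dots> = (\<Sum>\<sigma>\<in>A \<inter> oppsI G i I. ?f \<sigma>) + (\<Sum>\<sigma>\<in>A - oppsI G i I. ?f \<sigma>)"
    using A(1) by (rule sum.Int_Diff)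
  also have "(\<Sum>\<sigma>\<in>A - oppsI G i I. ?f \<sigma>) = 0"
  proof (rule sum.neutral, rule ballI)
    fix \<sigma> assume \<sigma>: "\<sigma> \<in> A - oppsI G i I"
    then have "\<sigma> \<in> opps G i" "\<not> opp_reaches G i \<sigma> I" using A(3) unfolding oppsI_def by auto
    then show "?f \<sigma> = 0" using splice_out[OF i _ s s' I] by simp
  qed
  also have "(\<Sum>\<sigma>\<in>A \<inter> oppsI G i I. ?f \<sigma>) = (\<Sum>\<sigma>\<in>A \<inter> oppsI G i I. pmf p \<sigma> * (u i \<sigma> s' - u i \<sigma> s))"
  proof (rule sum.cong[OF refl])
    fix \<sigma> assume \<sigma>: "\<sigma> \<in> A \<inter> oppsI G i I"
    then have "\<sigma> \<in> opps G i" "opp_reaches G i \<sigma> I" unfolding oppsI_def by auto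
    then show "?f \<sigma> = pmf p \<sigma> * (u i \<sigma> s' - u i \<sigma> s)" using splice_in[OF i _ s I _ sr rep] by simp
  qed
  finally show ?thesis by simp
qed

lemma cond_diff:
  assumes A: "finite A" "set_pmf p \<subseteq> A" and ne: "set_pmf p \<inter> B \<noteq> {}"
  shows "(\<Sum>\<sigma>\<in>A \<inter> B. pmf p \<sigma> * (u i \<sigma> s' - u i \<sigma> s)) =
     measure_pmf.prob p B * (EU G i (cond_pmf p B) s' - EU G i (cond_pmf p B) s)"
proof -
  have P: "measure_pmf.prob p B > 0" using pos_of_ne[OF ne] .
  have "(\<Sum>\<sigma>\<in>A \<inter> B. pmf p \<sigma> * (u i \<sigma> s' - u i \<sigma> s)) =
        (\<Sum>\<sigma>\<in>A \<inter> B. pmf p \<sigma> * u i \<sigma> s') - (\<Sum>\<sigma>\<in>A \<inter> B. pmf p \<sigma> * u i \<sigma> s)"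
    by (simp add: sum_subtractf right_diff_distrib)
  also have "\<dots> = measure_pmf.prob p B * (EU G i (cond_pmf p B) s' - EU G i (cond_pmf p B) s)"
    using EU_cond[OF A ne, of i s'] EU_cond[OF A ne, of i s] P by (simp add: field_simps)
  finally show ?thesis .
qed

lemma finite_argmax: "finite S \<Longrightarrow> S \<noteq> {} \<Longrightarrow> \<exists>x\<in>S. \<forall>y\<in>S. (f y :: real) \<le> f x"
proof (induction S rule: finite_ne_induct)
  case (singleton x) then show ?case by simp
next
  case (insert a F)
  then obtain x where x: "x \<in> F" "\<forall>y\<in>F. f y \<le> f x" by blast
  show ?case
  proof (cases "f a \<le> f x")
    case True then show ?thesis using x by auto
  next
    case False then show ?thesis using x by (intro bexI[of _ a]) auto
  qed
qed

fun lexsel :: "'i \<Rightarrow> ('i,'a) prof pmf list \<Rightarrow> ('i,'a) strat set \<Rightarrow> ('i,'a) strat set" where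
  "lexsel i [] S = S"
| "lexsel i (p # ps) S = lexsel i ps {x\<in>S. \<forall>y\<in>S. EU G i p y \<le> EU G i p x}"

lemma lexsel_sub: "lexsel i ps S \<subseteq> S"
  by (induction ps arbitrary: S) auto

lemma lexsel_ne: "finite S \<Longrightarrow> S \<noteq> {} \<Longrightarrow> lexsel i ps S \<noteq> {}"
proof (induction ps arbitrary: S)
  case Nil then show ?case by simp
next
  case (Cons p ps)
  let ?S = "{x\<in>S. \<forall>y\<in>S. EU G i p y \<le> EU G i p x}"
  have "?S \<noteq> {}" using finite_argmax[OF Cons.prems, of "EU G i p"] by blast
  moreover have "finite ?S" using Cons.prems by simp
  ultimately show ?case using Cons.IH by simp
qed

lemma lexsel_opt:
  "s \<in> lexsel i ps S \<Longrightarrow> y \<in> S \<Longrightarrow> t < length ps \<Longrightarrow> (\<forall>t'<t. EU G i (ps!t') y = EU G i (ps!t') s) \<Longrightarrow>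
   EU G i (ps!t) y > EU G i (ps!t) s \<Longrightarrow> False"
proof (induction ps arbitrary: S t)
  case Nil then show ?case by simp
next
  case (Cons p ps)
  let ?S = "{x\<in>S. \<forall>y\<in>S. EU G i p y \<le> EU G i p x}"
  have sS: "s \<in> ?S" using Cons.prems(1) lexsel_sub by fastforce
  show ?case
  proof (cases t)
    case 0 then show ?thesis using sS Cons.prems(2,5) by force
  next
    case (Suc t')
    have "EU G i p y = EU G i p s" using Cons.prems(4) Suc by force
    then have "y \<in> ?S" using sS Cons.prems(2) by auto
    moreover have "\<forall>t''<t'. EU G i (ps!t'') y = EU G i (ps!t'') s" using Cons.prems(4) Suc by force
    ultimately show ?thesis using Cons.IH[of ?S t'] Cons.prems(1,3,5) Suc by simp
  qed
qed

lemma lex_rational: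
  assumes i: "i \<in> players G" and ps: "\<forall>p\<in>set ps. set_pmf p \<subseteq> opps G i"
    and s: "s \<in> lexsel i ps (strats G i)" and I: "I \<in> infosets G i" and sr: "strat_reaches G i s I"
    and t: "t < length ps" "\<forall>t'<t. set_pmf (ps!t') \<inter> oppsI G i I = {}" "set_pmf (ps!t) \<inter> oppsI G i I \<noteq> {}"
    and rep: "replacement G i I s' s"
  shows "EU G i (cond_pmf (ps!t) (oppsI G i I)) s' \<le> EU G i (cond_pmf (ps!t) (oppsI G i I)) s"
proof (rule ccontr)
  assume c: "\<not> ?thesis"
  have sS: "s \<in> strats G i" using s lexsel_sub by blast
  have s': "s' \<in> strats G i" using rep unfolding replacement_def by blast
  let ?y = "splice I s' s"
  have y: "?y \<in> strats G i" using splice_strat[OF i I sS s'] .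
  have fin: "\<And>t. t < length ps \<Longrightarrow> finite (set_pmf (ps!t)) \<and> set_pmf (ps!t) \<subseteq> opps G i"
    using ps opps_finite by (meson finite_subset nth_mem)
  have eq: "\<forall>t'<t. EU G i (ps!t') ?y = EU G i (ps!t') s"
  proof (intro allI impI)
    fix t' assume t': "t' < t"
    then have "EU G i (ps!t') ?y - EU G i (ps!t') s = 0"
      using EU_splice_diff[OF i _ subset_refl _ I sS sr rep] fin[of t'] t by simp
    then show "EU G i (ps!t') ?y = EU G i (ps!t') s" by simp
  qed
  have "EU G i (ps!t) ?y - EU G i (ps!t) s =
     measure_pmf.prob (ps!t) (oppsI G i I) * (EU G i (cond_pmf (ps!t) (oppsI G i I)) s' - EU G i (cond_pmf (ps!t) (oppsI G i I)) s)"
    using EU_splice_diff[OF i _ subset_refl _ I sS sr rep] fin[OF t(1)] cond_diff[OF _ subset_refl t(3)] by simp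
  moreover have "measure_pmf.prob (ps!t) (oppsI G i I) > 0" using pos_of_ne[OF t(3)] .
  moreover have "EU G i (cond_pmf (ps!t) (oppsI G i I)) s' - EU G i (cond_pmf (ps!t) (oppsI G i I)) s > 0"
    using c by simp
  ultimately have "EU G i (ps!t) ?y - EU G i (ps!t) s > 0" by simp
  then have "EU G i (ps!t) ?y > EU G i (ps!t) s" by simp
  then show False using lexsel_opt[OF s y t(1) eq] by blast
qed


lemma strat_reaches_oppsI: "strat_reaches G i s I \<Longrightarrow> s \<in> strats G i \<Longrightarrow> \<exists>\<sigma>. \<sigma> \<in> oppsI G i I \<and> reachesI G (\<sigma>(i := s)) I"
  unfolding strat_reaches_def oppsI_def opp_reaches_def by blast

lemma init_strat_reaches:
  assumes i: "i \<in> players G" and I: "init i I" and \<sigma>: "\<sigma> \<in> opps G i" and r: "opp_reaches G i \<sigma> I"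
  shows "reachesI G (\<sigma>(i := y)) I"
proof -
  obtain x h where "x \<in> strats G i" "h \<in> I" "reaches G (\<sigma>(i := x)) h"
    using r unfolding opp_reaches_def reachesI_def by blast
  then show ?thesis using reach_init[OF i I] unfolding reachesI_def by blast
qed

lemma init_replacement: "init i I \<Longrightarrow> s' \<in> strats G i \<Longrightarrow> replacement G i I s' s"
  unfolding replacement_def init_def by blast

lemma reach_mono:
  assumes i: "i \<in> players G" and I: "I \<in> infosets G i" and I': "I' \<in> infosets G i" and p: "precedes I I'"
    and r: "opp_reaches G i \<sigma> I'"
  shows "opp_reaches G i \<sigma> I"
proof -
  obtain x h where xh: "x \<in> strats G i" "h \<in> I'" "reaches G (\<sigma>(i := x)) h"
    using r unfolding opp_reaches_def reachesI_def by blast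
  obtain k where k: "k < length h" "i \<in> active G (take k h)" "info G i (take k h) = I"
    using precedesD[OF i I I' p xh(2)] by blast
  have hh: "h \<in> hists G" using xh(3) reaches_def by blast
  have "take k h \<in> I" using take_in_info[OF i hh k(2)] k(3) by simp
  then show ?thesis unfolding opp_reaches_def reachesI_def using xh(1) reaches_take[OF xh(3)] by blast
qed

lemma measure_fin: "finite (set_pmf p) \<Longrightarrow> measure_pmf.prob p B = (\<Sum>x\<in>set_pmf p \<inter> B. pmf p x)"
proof -
  assume f: "finite (set_pmf p)"
  have "measure_pmf.prob p B = measure_pmf.prob p (B \<inter> set_pmf p)" by (simp add: measure_Int_set_pmf)
  also have "\<dots> = (\<Sum>x\<in>B \<inter> set_pmf p. pmf p x)" using f by (simp add: measure_measure_pmf_finite)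
  finally show ?thesis by (simp add: Int_commute)
qed

lemma cond_cond:
  assumes f: "finite (set_pmf p)" and ne: "set_pmf p \<inter> A \<noteq> {}" and ne2: "set_pmf (cond_pmf p A) \<inter> B \<noteq> {}"
  shows "cond_pmf (cond_pmf p A) B = cond_pmf p (A \<inter> B)"
proof -
  have ne3: "set_pmf p \<inter> (A \<inter> B) \<noteq> {}" using ne2 set_cond_pmf[OF ne] by auto
  have PA: "measure_pmf.prob p A > 0" using pos_of_ne[OF ne] .
  have fc: "finite (set_pmf (cond_pmf p A))" using f set_cond_pmf[OF ne] by simp
  have "measure_pmf.prob (cond_pmf p A) B = (\<Sum>x\<in>set_pmf p \<inter> A \<inter> B. pmf p x / measure_pmf.prob p A)"
    using measure_fin[OF fc, of B] set_cond_pmf[OF ne] pmf_cond[OF ne]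
    by (simp add: Int_assoc)
  also have "\<dots> = measure_pmf.prob p (A \<inter> B) / measure_pmf.prob p A"
    using measure_fin[OF f, of "A \<inter> B"] by (simp add: sum_divide_distrib Int_assoc)
  finally have mB: "measure_pmf.prob (cond_pmf p A) B = measure_pmf.prob p (A \<inter> B) / measure_pmf.prob p A" .
  show ?thesis
  proof (rule pmf_eqI)
    fix x
    show "pmf (cond_pmf (cond_pmf p A) B) x = pmf (cond_pmf p (A \<inter> B)) x"
      using PA by (simp add: pmf_cond[OF ne2] pmf_cond[OF ne3] pmf_cond[OF ne] mB)
  qed
qed

end

lemma strong_levels_length: "length (strong_levels G \<beta> n) = n"
  by (induction n) auto

lemma strong_levels_nth: "0 < l \<Longrightarrow> l \<le> n \<Longrightarrow> strong_levels G \<beta> n ! (l - 1) = strong_L G \<beta> l"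
proof (induction n)
  case 0 then show ?case by simp
next
  case (Suc n)
  show ?case
  proof (cases "l = Suc n")
    case True then show ?thesis by (simp add: strong_L_def)
  next
    case False
    then have "l \<le> n" using Suc.prems by simp
    moreover have "l - 1 < n" using \<open>l \<le> n\<close> Suc.prems by simp
    ultimately show ?thesis using Suc by (simp add: nth_append strong_levels_length)
  qed
qed

lemma strong_L_Suc: "strong_L G \<beta> (Suc n) = next_level G \<beta> (strong_levels G \<beta> n)"
  by (simp add: strong_L_def nth_append strong_levels_length)

locale setting = game G for G :: "('i,'a) efg" +
  fixes \<beta>b :: "'i \<Rightarrow> ('i,'a) bsys" and b1 :: "'i \<Rightarrow> ('i,'a) prof pmf"
  assumes bs: "\<forall>i\<in>players G. \<beta>b i \<in> belief_systems G i \<and> full_support_bs G i (\<beta>b i)"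
    and nf: "\<forall>i\<in>players G. full_support_nf G i (b1 i) \<and> consistent G i (b1 i) (\<beta>b i)"
begin

lemma b1_set: "i \<in> players G \<Longrightarrow> set_pmf (b1 i) = opps G i"
  using nf unfolding full_support_nf_def by blast

lemma b1_cons: "i \<in> players G \<Longrightarrow> I \<in> infosets G i \<Longrightarrow> \<beta>b i I = cond_pmf (b1 i) (oppsI G i I)"
  using nf unfolding consistent_def by blast

lemma oppsI_sub: "oppsI G i I \<subseteq> opps G i" unfolding oppsI_def by blast

lemma lvl1_exists: assumes i: "i \<in> players G" shows "\<exists>s. rational_all G i (\<beta>b i) s"
proof -
  have "lexsel i [b1 i] (strats G i) \<noteq> {}" by (rule lexsel_ne[OF strats_finite strats_ne])
  then obtain s where s: "s \<in> lexsel i [b1 i] (strats G i)" by blast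
  have sS: "s \<in> strats G i" using s lexsel_sub by blast
  have ps: "\<forall>p\<in>set [b1 i]. set_pmf p \<subseteq> opps G i" using b1_set[OF i] by simp
  have "rational_at G i (\<beta>b i) s I" if I: "I \<in> infosets G i" for I
  proof (cases "strat_reaches G i s I")
    case False then show ?thesis unfolding rational_at_def by blast
  next
    case sr: True
    have "EU G i (\<beta>b i I) s' \<le> EU G i (\<beta>b i I) s" if rep: "replacement G i I s' s" for s'
    proof -
      obtain \<sigma> where \<sigma>: "\<sigma> \<in> oppsI G i I" using strat_reaches_oppsI[OF sr sS] by blast
      then have "\<sigma> \<in> set_pmf ([b1 i] ! 0)" using b1_set[OF i] oppsI_sub[of i I] by auto
      then have ne: "set_pmf ([b1 i] ! 0) \<inter> oppsI G i I \<noteq> {}" using \<sigma> by blast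
      have t1: "0 < length [b1 i]" by simp
      have t2: "\<forall>t'<0. set_pmf ([b1 i]!t') \<inter> oppsI G i I = {}" by simp
      have "EU G i (cond_pmf ([b1 i]!0) (oppsI G i I)) s' \<le> EU G i (cond_pmf ([b1 i]!0) (oppsI G i I)) s"
        by (rule lex_rational[OF i ps s I sr t1 t2 ne rep])
      then show ?thesis using b1_cons[OF i I] by simp
    qed
    then show ?thesis unfolding rational_at_def by blast
  qed
  then show ?thesis using sS unfolding rational_all_def by blast
qed

lemma strong_L1: "strong_L G \<beta>b 1 i = {s. rational_all G i (\<beta>b i) s}"
  using strong_L_Suc[of G \<beta>b 0] by (simp add: next_level_def Bk_def)


lemma opps_cover:
  assumes i: "i \<in> players G" and \<sigma>: "\<sigma> \<in> opps G i" and I: "I \<in> infosets G i" and r: "opp_reaches G i \<sigma> I"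
  shows "\<exists>I0. init i I0 \<and> \<sigma> \<in> oppsI G i I0"
proof -
  obtain x h where xh: "x \<in> strats G i" "h \<in> I" "reaches G (\<sigma>(i := x)) h"
    using r unfolding opp_reaches_def reachesI_def by blast
  have a: "i \<in> active G h" using infoset_mem[OF i I xh(2)] by blast
  obtain I0 h' where "init i I0" "h' \<in> I0" "reaches G (\<sigma>(i := x)) h'"
    using reach_to_init[OF i xh(3) a] by blast
  then show ?thesis unfolding oppsI_def opp_reaches_def reachesI_def using \<sigma> xh(1) by blast
qed

lemma oppsI_disj:
  assumes i: "i \<in> players G" and I: "init i I" and I': "init i I'" and ne: "I \<noteq> I'"
  shows "oppsI G i I \<inter> oppsI G i I' = {}"
proof (rule ccontr)
  assume "oppsI G i I \<inter> oppsI G i I' \<noteq> {}"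
  then obtain \<sigma> where "opp_reaches G i \<sigma> I" "opp_reaches G i \<sigma> I'" unfolding oppsI_def by blast
  then obtain x h y h' where "h \<in> I" "reaches G (\<sigma>(i := x)) h" "h' \<in> I'" "reaches G (\<sigma>(i := y)) h'"
    unfolding opp_reaches_def reachesI_def by blast
  then have "I = I'" using init_unique[OF i I I'] by blast
  then show False using ne by blast
qed

lemma lvl1_incl:
  assumes i: "i \<in> players G" and ra: "rational_all G i (\<beta>b i) s"
  shows "best_reply G i (b1 i) s"
proof -
  have sS: "s \<in> strats G i" using ra unfolding rational_all_def by blast
  have rat: "\<And>I. I \<in> infosets G i \<Longrightarrow> rational_at G i (\<beta>b i) s I" using ra unfolding rational_all_def by blast
  have "EU G i (b1 i) s' \<le> EU G i (b1 i) s" if s': "s' \<in> strats G i" for s'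
  proof -
    let ?f = "\<lambda>\<sigma>. pmf (b1 i) \<sigma> * (u i \<sigma> s' - u i \<sigma> s)"
    let ?Ini = "{I. init i I}"
    let ?N = "{\<sigma>\<in>opps G i. \<forall>I\<in>infosets G i. \<not> opp_reaches G i \<sigma> I}"
    have finIni: "finite ?Ini" using infosets_finite[of i] by (rule finite_subset[rotated]) (auto simp: init_def)
    have fo: "finite (opps G i)" by (rule opps_finite)
    have d: "EU G i (b1 i) s' - EU G i (b1 i) s = (\<Sum>\<sigma>\<in>opps G i. ?f \<sigma>)"
      using EU_sum[OF fo, of "b1 i" i s'] EU_sum[OF fo, of "b1 i" i s] b1_set[OF i]
      by (simp add: sum_subtractf right_diff_distrib)
    have cov: "opps G i = ?N \<union> (\<Union>I\<in>?Ini. oppsI G i I)"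
    proof
      show "opps G i \<subseteq> ?N \<union> (\<Union>I\<in>?Ini. oppsI G i I)"
      proof
        fix \<sigma> assume \<sigma>: "\<sigma> \<in> opps G i"
        show "\<sigma> \<in> ?N \<union> (\<Union>I\<in>?Ini. oppsI G i I)"
        proof (cases "\<sigma> \<in> ?N")
          case False
          then obtain I where "I \<in> infosets G i" "opp_reaches G i \<sigma> I" using \<sigma> by blast
          then show ?thesis using opps_cover[OF i \<sigma>] by blast
        qed simp
      qed
      show "?N \<union> (\<Union>I\<in>?Ini. oppsI G i I) \<subseteq> opps G i" using oppsI_sub by blast
    qed
    have disj1: "?N \<inter> (\<Union>I\<in>?Ini. oppsI G i I) = {}"
    proof (rule ccontr)
      assume "?N \<inter> (\<Union>I\<in>?Ini. oppsI G i I) \<noteq> {}"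
      then obtain \<sigma> I where "\<sigma> \<in> ?N" "init i I" "\<sigma> \<in> oppsI G i I" by blast
      then show False unfolding init_def oppsI_def by blast
    qed
    have subU: "(\<Union>I\<in>?Ini. oppsI G i I) \<subseteq> opps G i" using oppsI_sub by blast
    have finU: "finite (\<Union>I\<in>?Ini. oppsI G i I)" using finite_subset[OF subU fo] .
    have finN: "finite ?N" using fo by simp
    have S1: "(\<Sum>\<sigma>\<in>opps G i. ?f \<sigma>) = (\<Sum>\<sigma>\<in>?N. ?f \<sigma>) + (\<Sum>\<sigma>\<in>(\<Union>I\<in>?Ini. oppsI G i I). ?f \<sigma>)"
      using arg_cong[where f="sum ?f", OF cov] sum.union_disjoint[OF finN finU disj1] by simp
    have S2: "(\<Sum>\<sigma>\<in>?N. ?f \<sigma>) = 0"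
    proof (rule sum.neutral, rule ballI)
      fix \<sigma> assume \<sigma>: "\<sigma> \<in> ?N"
      then have "\<forall>I\<in>infosets G i. \<not> reachesI G (\<sigma>(i := s)) I"
        unfolding opp_reaches_def using sS by blast
      then have "u i \<sigma> s' = u i \<sigma> s" using no_reach_outcome[OF i _ sS s'] \<sigma> by simp
      then show "?f \<sigma> = 0" by simp
    qed
    have S3: "(\<Sum>\<sigma>\<in>(\<Union>I\<in>?Ini. oppsI G i I). ?f \<sigma>) = (\<Sum>I\<in>?Ini. \<Sum>\<sigma>\<in>oppsI G i I. ?f \<sigma>)"
    proof (rule sum.UNION_disjoint[OF finIni])
      show "\<forall>I\<in>?Ini. finite (oppsI G i I)" using fo oppsI_sub by (metis finite_subset)
      show "\<forall>I\<in>?Ini. \<forall>J\<in>?Ini. I \<noteq> J \<longrightarrow> oppsI G i I \<inter> oppsI G i J = {}"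
        using oppsI_disj[OF i] by blast
    qed
    have S4: "(\<Sum>I\<in>?Ini. \<Sum>\<sigma>\<in>oppsI G i I. ?f \<sigma>) \<le> 0"
    proof (rule sum_nonpos)
      fix I assume "I \<in> ?Ini"
      then have I0: "init i I" by simp
      then have I: "I \<in> infosets G i" by (simp add: init_def)
      show "(\<Sum>\<sigma>\<in>oppsI G i I. ?f \<sigma>) \<le> 0"
      proof (cases "oppsI G i I = {}")
        case True then show ?thesis by simp
      next
        case False
        then obtain \<sigma> where \<sigma>: "\<sigma> \<in> oppsI G i I" by blast
        then have ne: "set_pmf (b1 i) \<inter> oppsI G i I \<noteq> {}" using b1_set[OF i] oppsI_sub[of i I] by auto
        have "reachesI G (\<sigma>(i := s)) I" using init_strat_reaches[OF i I0] \<sigma> unfolding oppsI_def by blast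
        then have sr: "strat_reaches G i s I" unfolding strat_reaches_def using \<sigma> unfolding oppsI_def by blast
        have rep: "replacement G i I s' s" using init_replacement[OF I0 s'] .
        have le: "EU G i (\<beta>b i I) s' \<le> EU G i (\<beta>b i I) s" using rat[OF I] sr rep unfolding rational_at_def by blast
        have eqs: "opps G i \<inter> oppsI G i I = oppsI G i I" using oppsI_sub by blast
        have "(\<Sum>\<sigma>\<in>oppsI G i I. ?f \<sigma>) =
           measure_pmf.prob (b1 i) (oppsI G i I) * (EU G i (\<beta>b i I) s' - EU G i (\<beta>b i I) s)"
          using cond_diff[OF fo _ ne, of i s' s] b1_set[OF i] b1_cons[OF i I] eqs by simp
        moreover have "measure_pmf.prob (b1 i) (oppsI G i I) \<ge> 0" by simp
        ultimately show ?thesis using le by (simp add: mult_nonneg_nonpos)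
      qed
    qed
    have X: "(\<Sum>\<sigma>\<in>opps G i. ?f \<sigma>) \<le> 0" using S1 S2 S3 S4 by linarith
    show ?thesis using X d by linarith
  qed
  then show ?thesis unfolding best_reply_def using sS by blast
qed


definition Rl :: "('i \<Rightarrow> ('i,'a) strat set) list \<Rightarrow> 'i \<Rightarrow> nat \<Rightarrow> ('i,'a) hist set \<Rightarrow> bool" where
  "Rl ls i l I \<longleftrightarrow> (\<exists>\<sigma>\<in>oppsX G (ls ! (l - 1)) i. opp_reaches G i \<sigma> I)"

definition reached :: "('i \<Rightarrow> ('i,'a) strat set) list \<Rightarrow> 'i \<Rightarrow> ('i,'a) hist set \<Rightarrow> bool" where
  "reached ls i I \<longleftrightarrow> (\<exists>l\<in>{1..length ls}. Rl ls i l I)"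

definition gl :: "('i \<Rightarrow> ('i,'a) strat set) list \<Rightarrow> 'i \<Rightarrow> ('i,'a) hist set \<Rightarrow> nat" where
  "gl ls i I = (GREATEST l. l \<in> {1..length ls} \<and> Rl ls i l I)"

lemma Bk_iff: "ls \<noteq> [] \<Longrightarrow> \<beta> \<in> Bk G \<beta>b ls i \<longleftrightarrow> \<beta> \<in> belief_systems G i \<and>
   (\<forall>I\<in>infosets G i. (reached ls i I \<longrightarrow> set_pmf (\<beta> I) \<subseteq> oppsX G (ls ! (gl ls i I - 1)) i) \<and>
                       (\<not> reached ls i I \<longrightarrow> \<beta> I = \<beta>b i I))"
  unfolding Bk_def reached_def gl_def Rl_def by simp

lemma gl_props: assumes "reached ls i I"
  shows "gl ls i I \<in> {1..length ls}" "Rl ls i (gl ls i I) I" "\<And>l. l \<in> {1..length ls} \<Longrightarrow> Rl ls i l I \<Longrightarrow> l \<le> gl ls i I"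
proof -
  obtain l0 where l0: "l0 \<in> {1..length ls}" "Rl ls i l0 I" using assms reached_def by blast
  have "gl ls i I \<in> {1..length ls} \<and> Rl ls i (gl ls i I) I" unfolding gl_def
    by (rule GreatestI_nat[of _ l0 "length ls"]) (use l0 in auto)
  then show "gl ls i I \<in> {1..length ls}" "Rl ls i (gl ls i I) I" by auto
  fix l assume "l \<in> {1..length ls}" "Rl ls i l I"
  then show "l \<le> gl ls i I" unfolding gl_def by (intro Greatest_le_nat[of _ l "length ls"]) auto
qed

lemma Rl_mono: "i \<in> players G \<Longrightarrow> I \<in> infosets G i \<Longrightarrow> I' \<in> infosets G i \<Longrightarrow> precedes I I' \<Longrightarrow>
   Rl ls i l I' \<Longrightarrow> Rl ls i l I"
  unfolding Rl_def using reach_mono by blast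

lemma oppsX_sub: "oppsX G X i \<subseteq> opps G i" unfolding oppsX_def by blast

lemma oppsX_mono: "(\<forall>j\<in>players G. X j \<subseteq> Y j) \<Longrightarrow> oppsX G X i \<subseteq> oppsX G Y i"
  unfolding oppsX_def by blast

lemma oppsX_ne:
  assumes ne: "\<forall>j\<in>players G. X j \<noteq> {}" and sub: "\<forall>j\<in>players G. X j \<subseteq> strats G j"
  shows "oppsX G X i \<noteq> {}"
proof -
  define \<sigma> where "\<sigma> j = (if j \<in> allpl G \<and> j \<noteq> i then (if j \<in> players G then SOME x. x \<in> X j else cstrat j) else undefined)" for j
  have X: "(SOME x. x \<in> X j) \<in> X j" if jp: "j \<in> players G" for j
  proof -
    have "X j \<noteq> {}" using ne jp by blast
    then show ?thesis by (simp add: some_in_eq)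
  qed
  have A: "\<forall>j. (j \<in> allpl G \<and> j \<noteq> i \<longrightarrow> \<sigma> j \<in> strats G j) \<and> (\<not> (j \<in> allpl G \<and> j \<noteq> i) \<longrightarrow> \<sigma> j = undefined)"
  proof (intro allI conjI impI)
    fix j assume j: "j \<in> allpl G \<and> j \<noteq> i"
    show "\<sigma> j \<in> strats G j"
    proof (cases "j \<in> players G")
      case True
      then have "\<sigma> j = (SOME x. x \<in> X j)" using j unfolding \<sigma>_def by simp
      then have "\<sigma> j \<in> X j" using X[OF True] by simp
      moreover have "X j \<subseteq> strats G j" using sub True by blast
      ultimately show ?thesis by (rule subsetD[rotated])
    next
      case False
      then have "\<sigma> j = cstrat j" using j False unfolding \<sigma>_def by simp
      then show ?thesis using cstrat_in by simp
    qed
  next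
    fix j assume n: "\<not> (j \<in> allpl G \<and> j \<noteq> i)" show "\<sigma> j = undefined" unfolding \<sigma>_def by (rule if_not_P[OF n])
  qed
  have "\<sigma> \<in> opps G i" unfolding opps_def using A by blast
  moreover have "\<forall>j\<in>players G. j \<noteq> i \<longrightarrow> \<sigma> j \<in> X j"
  proof (intro ballI impI)
    fix j assume j: "j \<in> players G" "j \<noteq> i"
    then have "\<sigma> j = (SOME x. x \<in> X j)" unfolding \<sigma>_def by (simp add: allpl_def)
    then show "\<sigma> j \<in> X j" using X[OF j(1)] by simp
  qed
  ultimately show ?thesis unfolding oppsX_def by blast
qed

lemma strong_L_strats: "strong_L G \<beta>b (Suc n) j \<subseteq> strats G j"
  unfolding strong_L_Suc next_level_def rational_all_def by blast


lemma EU_return: "EU G i (return_pmf \<sigma>) x = u i \<sigma> x"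
  unfolding EU_def by simp

lemma step_incl:
  assumes i: "i \<in> players G" and n: "n \<ge> 1"
    and IH: "\<forall>j\<in>players G. strong_L G \<beta>b n j \<subseteq> nf_L G b1 n j"
    and NE: "\<forall>j\<in>players G. strong_L G \<beta>b n j \<noteq> {}"
    and s: "s \<in> strong_L G \<beta>b (Suc n) i"
  shows "\<exists>\<mu>. set_pmf \<mu> \<subseteq> oppsX G (nf_L G b1 n) i \<and> best_reply G i \<mu> s"
proof -
  let ?ls = "strong_levels G \<beta>b n"
  have lsl: "length ?ls = n" by (rule strong_levels_length)
  have lsne: "?ls \<noteq> []" using lsl n by auto
  have lsn: "?ls ! (n - 1) = strong_L G \<beta>b n" using strong_levels_nth[of n n] n by simp
  obtain \<beta> where \<beta>: "\<beta> \<in> Bk G \<beta>b ?ls i" and ra: "rational_all G i \<beta> s"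
    using s unfolding strong_L_Suc next_level_def by blast
  have sS: "s \<in> strats G i" using ra unfolding rational_all_def by blast
  have rat: "\<And>I. I \<in> infosets G i \<Longrightarrow> rational_at G i \<beta> s I" using ra unfolding rational_all_def by blast
  have Bk: "\<beta> \<in> belief_systems G i"
    "\<And>I. I \<in> infosets G i \<Longrightarrow> reached ?ls i I \<Longrightarrow> set_pmf (\<beta> I) \<subseteq> oppsX G (?ls ! (gl ?ls i I - 1)) i"
    using \<beta> Bk_iff[OF lsne] by blast+
  have Xsub: "oppsX G (strong_L G \<beta>b n) i \<subseteq> oppsX G (nf_L G b1 n) i"
    using oppsX_mono IH by blast
  define M where "M = {I. init i I \<and> (\<exists>\<sigma>\<in>oppsX G (strong_L G \<beta>b n) i. opp_reaches G i \<sigma> I)}"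
  have finM: "finite M" using infosets_finite[of i] by (rule finite_subset[rotated]) (auto simp: M_def init_def)
  have fo: "finite (opps G i)" by (rule opps_finite)
  have Msupp: "set_pmf (\<beta> I) \<subseteq> oppsX G (strong_L G \<beta>b n) i" if I: "I \<in> M" for I
  proof -
    have II: "I \<in> infosets G i" using I unfolding M_def init_def by blast
    have Rn: "Rl ?ls i n I" unfolding Rl_def lsn using I unfolding M_def by blast
    then have r: "reached ?ls i I" unfolding reached_def using lsl n by auto
    have "n \<le> gl ?ls i I" using gl_props(3)[OF r _ Rn] lsl n by auto
    moreover have "gl ?ls i I \<le> n" using gl_props(1)[OF r] lsl by auto
    ultimately have "gl ?ls i I = n" by simp
    then show ?thesis using Bk(2)[OF II r] lsn by simp
  qed
  have Mbr: "EU G i (\<beta> I) s' \<le> EU G i (\<beta> I) s" if I: "I \<in> M" and s': "s' \<in> strats G i" for I s'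
  proof -
    have I0: "init i I" and II: "I \<in> infosets G i" using I unfolding M_def init_def by blast+
    obtain \<sigma> where \<sigma>: "\<sigma> \<in> oppsX G (strong_L G \<beta>b n) i" "opp_reaches G i \<sigma> I" using I unfolding M_def by blast
    have \<sigma>o: "\<sigma> \<in> opps G i" using \<sigma>(1) oppsX_sub by blast
    have "reachesI G (\<sigma>(i := s)) I" using init_strat_reaches[OF i I0 \<sigma>o \<sigma>(2)] .
    then have sr: "strat_reaches G i s I" unfolding strat_reaches_def using \<sigma>o by blast
    have rep: "replacement G i I s' s" using init_replacement[OF I0 s'] .
    show ?thesis using rat[OF II] sr rep unfolding rational_at_def by blast
  qed
  show ?thesis
  proof (cases "M = {}")
    case False
    define \<mu> where "\<mu> = bind_pmf (pmf_of_set M) \<beta>"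
    have setM: "set_pmf (pmf_of_set M) = M" using False finM by simp
    have set\<mu>: "set_pmf \<mu> \<subseteq> oppsX G (strong_L G \<beta>b n) i" unfolding \<mu>_def using Msupp setM by auto
    have finb: "\<And>I. I \<in> M \<Longrightarrow> finite (set_pmf (\<beta> I))"
      using Msupp oppsX_sub fo by (meson finite_subset)
    have EUeq: "EU G i \<mu> x = (\<Sum>I\<in>M. pmf (pmf_of_set M) I * EU G i (\<beta> I) x)" for x
    proof -
      have "measure_pmf.expectation (bind_pmf (pmf_of_set M) \<beta>) (\<lambda>\<sigma>. u i \<sigma> x) =
        (\<Sum>I\<in>M. pmf (pmf_of_set M) I *\<^sub>R measure_pmf.expectation (\<beta> I) (\<lambda>\<sigma>. u i \<sigma> x))"
        by (rule pmf_expectation_bind[OF finM finb]) (use setM in auto)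
      then show ?thesis unfolding EU_def \<mu>_def by simp
    qed
    have "EU G i \<mu> s' \<le> EU G i \<mu> s" if s': "s' \<in> strats G i" for s'
      unfolding EUeq by (rule sum_mono) (use Mbr[OF _ s'] in \<open>simp add: mult_left_mono\<close>)
    then have "best_reply G i \<mu> s" unfolding best_reply_def using sS by blast
    then show ?thesis using set\<mu> Xsub by blast
  next
    case True
    have sub: "\<forall>j\<in>players G. strong_L G \<beta>b n j \<subseteq> strats G j"
    proof
      fix j assume "j \<in> players G"
      have "Suc (n - 1) = n" using n by simp
      then show "strong_L G \<beta>b n j \<subseteq> strats G j" using strong_L_strats[of "n - 1" j] by simp
    qed
    obtain \<sigma>0 where \<sigma>0: "\<sigma>0 \<in> oppsX G (strong_L G \<beta>b n) i" using oppsX_ne[OF NE sub] by blast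
    have \<sigma>o: "\<sigma>0 \<in> opps G i" using \<sigma>0 oppsX_sub by blast
    have nr: "\<forall>I\<in>infosets G i. \<not> reachesI G (\<sigma>0(i := s)) I"
    proof (intro ballI notI)
      fix I assume I: "I \<in> infosets G i" and r: "reachesI G (\<sigma>0(i := s)) I"
      then have "opp_reaches G i \<sigma>0 I" unfolding opp_reaches_def using sS by blast
      then obtain I0 where "init i I0" "\<sigma>0 \<in> oppsI G i I0" using opps_cover[OF i \<sigma>o I] by blast
      then have "I0 \<in> M" unfolding M_def oppsI_def using \<sigma>0 by blast
      then show False using True by blast
    qed
    have "EU G i (return_pmf \<sigma>0) s' \<le> EU G i (return_pmf \<sigma>0) s" if s': "s' \<in> strats G i" for s'
      using no_reach_outcome[OF i \<sigma>o sS s' nr] by (simp add: EU_return)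
    then have "best_reply G i (return_pmf \<sigma>0) s" unfolding best_reply_def using sS by blast
    moreover have "set_pmf (return_pmf \<sigma>0) \<subseteq> oppsX G (nf_L G b1 n) i" using \<sigma>0 Xsub by auto
    ultimately show ?thesis by blast
  qed
qed


lemma bs_props: assumes i: "i \<in> players G"
  shows "\<And>I. I \<in> infosets G i \<Longrightarrow> set_pmf (\<beta>b i I) \<subseteq> oppsI G i I"
    "\<And>I I'. I \<in> infosets G i \<Longrightarrow> I' \<in> infosets G i \<Longrightarrow> precedes I I' \<Longrightarrow>
       measure_pmf.prob (\<beta>b i I) (oppsI G i I') > 0 \<Longrightarrow> \<beta>b i I' = cond_pmf (\<beta>b i I) (oppsI G i I')"
proof -
  have "\<beta>b i \<in> belief_systems G i" using bs i by blast
  then have A: "\<forall>I\<in>infosets G i. set_pmf (\<beta>b i I) \<subseteq> oppsI G i I"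
    and B: "\<forall>I\<in>infosets G i. \<forall>I'\<in>infosets G i. precedes I I' \<and>
          measure_pmf.prob (\<beta>b i I) (oppsI G i I') > 0 \<longrightarrow> \<beta>b i I' = cond_pmf (\<beta>b i I) (oppsI G i I')"
    unfolding belief_systems_def by blast+
  show "\<And>I. I \<in> infosets G i \<Longrightarrow> set_pmf (\<beta>b i I) \<subseteq> oppsI G i I" using A by blast
  show "\<And>I I'. I \<in> infosets G i \<Longrightarrow> I' \<in> infosets G i \<Longrightarrow> precedes I I' \<Longrightarrow>
       measure_pmf.prob (\<beta>b i I) (oppsI G i I') > 0 \<Longrightarrow> \<beta>b i I' = cond_pmf (\<beta>b i I) (oppsI G i I')"
    using B by blast
qed

lemma ne_of_pos: "measure_pmf.prob p B > 0 \<Longrightarrow> set_pmf p \<inter> B \<noteq> {}"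
  using measure_pmf_zero_iff[of p B] by auto

lemma lvl_exists:
  assumes i: "i \<in> players G" and n: "n \<ge> 1"
    and NE: "\<forall>l\<in>{1..n}. \<forall>j\<in>players G. strong_L G \<beta>b l j \<noteq> {}"
  shows "strong_L G \<beta>b (Suc n) i \<noteq> {}"
proof -
  let ?ls = "strong_levels G \<beta>b n"
  have lsl: "length ?ls = n" by (rule strong_levels_length)
  have lsne: "?ls \<noteq> []" using lsl n by auto
  have lsnth: "?ls ! (l - 1) = strong_L G \<beta>b l" if "l \<in> {1..n}" for l
    using strong_levels_nth[of l n G \<beta>b] that by simp
  define X where "X l = oppsX G (?ls ! (l - 1)) i" for l
  have fo: "finite (opps G i)" by (rule opps_finite)
  have Xo: "X l \<subseteq> opps G i" for l unfolding X_def by (rule oppsX_sub)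
  have Xf: "finite (X l)" for l using finite_subset[OF Xo fo] .
  have Xne: "X l \<noteq> {}" if l: "l \<in> {1..n}" for l
  proof -
    have sub: "\<forall>j\<in>players G. strong_L G \<beta>b l j \<subseteq> strats G j"
    proof
      fix j assume "j \<in> players G"
      have "Suc (l - 1) = l" using l by simp
      then show "strong_L G \<beta>b l j \<subseteq> strats G j" using strong_L_strats[of "l - 1" j] by simp
    qed
    have "oppsX G (strong_L G \<beta>b l) i \<noteq> {}" using oppsX_ne[OF _ sub] NE l by blast
    then show ?thesis unfolding X_def using lsnth[OF l] by simp
  qed
  define \<nu> where "\<nu> l = pmf_of_set (X l)" for l
  have setnu: "set_pmf (\<nu> l) = X l" if "l \<in> {1..n}" for l unfolding \<nu>_def using Xne[OF that] Xf by simp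
  have Rl_iff: "Rl ?ls i l I \<longleftrightarrow> set_pmf (\<nu> l) \<inter> oppsI G i I \<noteq> {}" if l: "l \<in> {1..n}" for l I
    unfolding Rl_def setnu[OF l] X_def[symmetric] oppsI_def using Xo by blast
  define \<beta> where "\<beta> I = (if reached ?ls i I then cond_pmf (\<nu> (gl ?ls i I)) (oppsI G i I) else \<beta>b i I)" for I
  have glr: "gl ?ls i I \<in> {1..n}" "Rl ?ls i (gl ?ls i I) I" "\<And>l. l \<in> {1..n} \<Longrightarrow> Rl ?ls i l I \<Longrightarrow> l \<le> gl ?ls i I"
    if "reached ?ls i I" for I using gl_props[OF that] lsl by auto
  have nerch: "set_pmf (\<nu> (gl ?ls i I)) \<inter> oppsI G i I \<noteq> {}" if "reached ?ls i I" for I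
    using Rl_iff glr[OF that] by blast
  have setb: "set_pmf (\<beta> I) = X (gl ?ls i I) \<inter> oppsI G i I" if "reached ?ls i I" for I
    unfolding \<beta>_def using that set_cond_pmf[OF nerch[OF that]] setnu[OF glr(1)[OF that]] by simp
  define ps where "ps = map (\<lambda>t. if t < n then \<nu> (n - t) else b1 i) [0..<Suc n]"
  have psl: "length ps = Suc n" unfolding ps_def by simp
  have psn: "ps ! t = (if t < n then \<nu> (n - t) else b1 i)" if "t < Suc n" for t
    unfolding ps_def using that by (simp del: upt_Suc)
  have psopp: "\<forall>p\<in>set ps. set_pmf p \<subseteq> opps G i"
  proof
    fix p assume "p \<in> set ps"
    then obtain t where t: "t < Suc n" "p = ps ! t" using psl by (metis in_set_conv_nth)
    show "set_pmf p \<subseteq> opps G i"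
    proof (cases "t < n")
      case True
      then have "n - t \<in> {1..n}" by auto
      then show ?thesis using t psn True setnu Xo by auto
    next
      case False then show ?thesis using t psn b1_set[OF i] by auto
    qed
  qed
  have "lexsel i ps (strats G i) \<noteq> {}" by (rule lexsel_ne[OF strats_finite strats_ne])
  then obtain s where s: "s \<in> lexsel i ps (strats G i)" by blast
  have sS: "s \<in> strats G i" using s lexsel_sub by blast
  have rat: "rational_at G i \<beta> s I" if I: "I \<in> infosets G i" for I
  proof (cases "strat_reaches G i s I")
    case False then show ?thesis unfolding rational_at_def by blast
  next
    case sr: True
    have "EU G i (\<beta> I) s' \<le> EU G i (\<beta> I) s" if rep: "replacement G i I s' s" for s'
    proof (cases "reached ?ls i I")
      case True
      let ?l = "gl ?ls i I"
      define t where "t = n - ?l"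
      have l: "?l \<in> {1..n}" using glr(1)[OF True] .
      have t1: "t < length ps" using psl t_def l by auto
      have pst: "ps ! t = \<nu> ?l" using psn[of t] t_def l by auto
      have t2: "\<forall>t'<t. set_pmf (ps!t') \<inter> oppsI G i I = {}"
      proof (intro allI impI)
        fix t' assume t': "t' < t"
        then have l': "n - t' \<in> {1..n}" "?l < n - t'" using t_def l by auto
        have "ps ! t' = \<nu> (n - t')" using psn[of t'] t' t_def l by auto
        moreover have "\<not> Rl ?ls i (n - t') I" using glr(3)[OF True l'(1)] l'(2) by auto
        ultimately show "set_pmf (ps!t') \<inter> oppsI G i I = {}" using Rl_iff[OF l'(1)] by simp
      qed
      have t3: "set_pmf (ps!t) \<inter> oppsI G i I \<noteq> {}" using pst nerch[OF True] by simp
      have "EU G i (cond_pmf (ps!t) (oppsI G i I)) s' \<le> EU G i (cond_pmf (ps!t) (oppsI G i I)) s"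
        by (rule lex_rational[OF i psopp s I sr t1 t2 t3 rep])
      then show ?thesis using pst True unfolding \<beta>_def by simp
    next
      case False
      have t1: "n < length ps" using psl by simp
      have pst: "ps ! n = b1 i" using psn[of n] by simp
      have t2: "\<forall>t'<n. set_pmf (ps!t') \<inter> oppsI G i I = {}"
      proof (intro allI impI)
        fix t' assume t': "t' < n"
        then have l': "n - t' \<in> {1..n}" by auto
        have "ps ! t' = \<nu> (n - t')" using psn[of t'] t' by auto
        moreover have "\<not> Rl ?ls i (n - t') I" using False l' lsl unfolding reached_def by auto
        ultimately show "set_pmf (ps!t') \<inter> oppsI G i I = {}" using Rl_iff[OF l'] by simp
      qed
      obtain \<sigma> where \<sigma>: "\<sigma> \<in> oppsI G i I" using strat_reaches_oppsI[OF sr sS] by blast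
      then have "\<sigma> \<in> set_pmf (ps ! n)" using pst b1_set[OF i] oppsI_sub[of i I] by auto
      then have t3: "set_pmf (ps!n) \<inter> oppsI G i I \<noteq> {}" using \<sigma> by blast
      have "EU G i (cond_pmf (ps!n) (oppsI G i I)) s' \<le> EU G i (cond_pmf (ps!n) (oppsI G i I)) s"
        by (rule lex_rational[OF i psopp s I sr t1 t2 t3 rep])
      then show ?thesis using pst False b1_cons[OF i I] unfolding \<beta>_def by simp
    qed
    then show ?thesis unfolding rational_at_def by blast
  qed
  have ra: "rational_all G i \<beta> s" unfolding rational_all_def using sS rat by blast
  have bs1: "set_pmf (\<beta> I) \<subseteq> oppsI G i I" if I: "I \<in> infosets G i" for I
  proof (cases "reached ?ls i I")
    case True then show ?thesis using setb by blast
  next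
    case False then show ?thesis using bs_props(1)[OF i I] unfolding \<beta>_def by simp
  qed
  have bs2: "\<beta> I' = cond_pmf (\<beta> I) (oppsI G i I')"
    if I: "I \<in> infosets G i" and I': "I' \<in> infosets G i" and p: "precedes I I'"
      and pos: "measure_pmf.prob (\<beta> I) (oppsI G i I') > 0" for I I'
  proof -
    have nepos: "set_pmf (\<beta> I) \<inter> oppsI G i I' \<noteq> {}" using ne_of_pos[OF pos] .
    show ?thesis
    proof (cases "reached ?ls i I'")
      case True
      let ?l' = "gl ?ls i I'"
      have RI: "Rl ?ls i ?l' I" using Rl_mono[OF i I I' p glr(2)[OF True]] .
      then have rI: "reached ?ls i I" unfolding reached_def using glr(1)[OF True] lsl by auto
      let ?l = "gl ?ls i I"
      have le1: "?l' \<le> ?l" using glr(3)[OF rI glr(1)[OF True] RI] .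
      obtain \<sigma> where \<sigma>: "\<sigma> \<in> X ?l" "\<sigma> \<in> oppsI G i I'" using nepos setb[OF rI] by blast
      have "Rl ?ls i ?l I'" unfolding Rl_def using \<sigma> unfolding X_def oppsI_def by blast
      then have le2: "?l \<le> ?l'" using glr(3)[OF True glr(1)[OF rI]] by blast
      have eq: "?l = ?l'" using le1 le2 by simp
      have sub: "oppsI G i I' \<subseteq> oppsI G i I" using reach_mono[OF i I I' p] unfolding oppsI_def by blast
      have fin: "finite (set_pmf (\<nu> ?l))" using setnu[OF glr(1)[OF rI]] Xf by simp
      have bI: "\<beta> I = cond_pmf (\<nu> ?l) (oppsI G i I)" unfolding \<beta>_def using rI by simp
      have bI': "\<beta> I' = cond_pmf (\<nu> ?l) (oppsI G i I')" unfolding \<beta>_def using True eq by simp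
      have "cond_pmf (cond_pmf (\<nu> ?l) (oppsI G i I)) (oppsI G i I') = cond_pmf (\<nu> ?l) (oppsI G i I \<inter> oppsI G i I')"
        by (rule cond_cond[OF fin nerch[OF rI]]) (use nepos bI in simp)
      also have "oppsI G i I \<inter> oppsI G i I' = oppsI G i I'" using sub by blast
      finally show ?thesis using bI bI' by simp
    next
      case False
      have nrI: "\<not> reached ?ls i I"
      proof
        assume rI: "reached ?ls i I"
        obtain \<sigma> where \<sigma>: "\<sigma> \<in> X (gl ?ls i I)" "\<sigma> \<in> oppsI G i I'" using nepos setb[OF rI] by blast
        have "Rl ?ls i (gl ?ls i I) I'" unfolding Rl_def using \<sigma> unfolding X_def oppsI_def by blast
        then show False using False glr(1)[OF rI] lsl unfolding reached_def by auto
      qed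
      have "\<beta> I = \<beta>b i I" "\<beta> I' = \<beta>b i I'" unfolding \<beta>_def using nrI False by simp_all
      then show ?thesis using bs_props(2)[OF i I I' p] pos by simp
    qed
  qed
  have "\<beta> \<in> belief_systems G i" unfolding belief_systems_def using bs1 bs2 by blast
  moreover have "\<forall>I\<in>infosets G i. (reached ?ls i I \<longrightarrow> set_pmf (\<beta> I) \<subseteq> oppsX G (?ls ! (gl ?ls i I - 1)) i) \<and>
                       (\<not> reached ?ls i I \<longrightarrow> \<beta> I = \<beta>b i I)"
    using setb unfolding X_def \<beta>_def by auto
  ultimately have "\<beta> \<in> Bk G \<beta>b ?ls i" using Bk_iff[OF lsne] by blast
  then have "s \<in> strong_L G \<beta>b (Suc n) i" unfolding strong_L_Suc next_level_def using ra by blast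
  then show ?thesis by blast
qed


lemma all_ne: "m \<ge> 1 \<Longrightarrow> \<forall>j\<in>players G. strong_L G \<beta>b m j \<noteq> {}"
proof (induction m rule: less_induct)
  case (less m)
  show ?case
  proof (cases "m = 1")
    case True then show ?thesis using lvl1_exists strong_L1 by auto
  next
    case False
    obtain n where m: "m = Suc n" using less.prems by (cases m) auto
    have n: "n \<ge> 1" using m False less.prems by simp
    have NE: "\<forall>l\<in>{1..n}. \<forall>j\<in>players G. strong_L G \<beta>b l j \<noteq> {}" using less.IH m by auto
    show ?thesis using lvl_exists[OF _ n NE] m by blast
  qed
qed

lemma all_incl: "m \<ge> 1 \<Longrightarrow> \<forall>j\<in>players G. strong_L G \<beta>b m j \<subseteq> nf_L G b1 m j"
proof (induction m)
  case 0 then show ?case by simp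
next
  case (Suc n)
  show ?case
  proof (cases "n = 0")
    case True
    then show ?thesis using strong_L1 lvl1_incl by auto
  next
    case False
    then have n: "n \<ge> 1" by simp
    obtain n' where n': "n = Suc n'" using False by (cases n) auto
    have IH: "\<forall>j\<in>players G. strong_L G \<beta>b n j \<subseteq> nf_L G b1 n j" using Suc.IH n by blast
    have NE: "\<forall>j\<in>players G. strong_L G \<beta>b n j \<noteq> {}" using all_ne n by blast
    show ?thesis
    proof (intro ballI subsetI)
      fix j s assume j: "j \<in> players G" and s: "s \<in> strong_L G \<beta>b (Suc n) j"
      obtain \<mu> where "set_pmf \<mu> \<subseteq> oppsX G (nf_L G b1 n) j" "best_reply G j \<mu> s"
        using step_incl[OF j n IH NE s] by blast
      then show "s \<in> nf_L G b1 (Suc n) j" using n' by auto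
    qed
  qed
qed

end

theorem proposition4:
  fixes G :: "('i,'a) efg"
    and \<beta>bar1 :: "'i \<Rightarrow> ('i,'a) bsys"
    and \<beta>1 :: "'i \<Rightarrow> ('i,'a) prof pmf"
    and k :: nat
  assumes "wf_efg G"
    and "\<forall>i\<in>players G. \<beta>bar1 i \<in> belief_systems G i \<and> full_support_bs G i (\<beta>bar1 i)"
    and "\<forall>i\<in>players G. full_support_nf G i (\<beta>1 i) \<and> consistent G i (\<beta>1 i) (\<beta>bar1 i)"
    and "k \<ge> 1"
  shows "Zset G (strong_L G \<beta>bar1 k) \<subseteq> Zset G (nf_L G \<beta>1 k)"
proof -
  interpret setting G \<beta>bar1 \<beta>1
    by (rule setting.intro[OF game.intro[OF assms(1)] setting_axioms.intro[OF assms(2) assms(3)]])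
  have inc: "\<forall>j\<in>players G. strong_L G \<beta>bar1 k j \<subseteq> nf_L G \<beta>1 k j" using all_incl assms(4) by blast
  have "{s \<in> profs G. \<forall>j\<in>players G. s j \<in> strong_L G \<beta>bar1 k j} \<subseteq> {s \<in> profs G. \<forall>j\<in>players G. s j \<in> nf_L G \<beta>1 k j}"
    using inc by blast
  then show ?thesis unfolding Zset_def by (rule image_mono)
qed

end
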